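(* The class $\mathrm{CEsp}$ is closed under the Cartesian (Hadamard) product: for nonnegative integers $a_\mu,b_\mu$ ($\mu\vdash n$), $$\Big(\sum_{\mu\vdash n}a_\mu\mathbf{C}_\mu\Big)\times\Big(\sum_{\mu\vdash n}b_\mu\mathbf{C}_\mu\Big)=\sum_{\mu\vdash n}\Big(\sum_{\alpha,\beta\vdash n}a_\alpha b_\beta\, b^\mu_{\alpha,\beta}\Big)\mathbf{C}_\mu,$$ with $b^\mu_{\alpha,\beta}\in\mathbb{N}$, so the product is again a nonnegative integer combination of the $\mathbf{C}_\mu$.
   Context: $\mathrm{CEsp}$ is the category whose objects are species $\sum_{\mu\vdash n}a_\mu\mathbf{C}_\mu$ with $a_\mu\in\mathbb{N}$ (disjoint unions of copies) and whose morphisms are natural transformations. $\mathbf{C}_\mu=X^n/\langle\sigma_\mu\rangle$, where $(X^n/H)[U]=\{\lambda H:\lambda:[n]\to U\text{ bijection}\}$ and $\sigma_\mu$ is the standard permutation of cycle type $\mu$ (cycles filled with $1,\ldots,n$ in increasing order). $(F\times G)[U]=F[U]\times G[U]$. $b^\mu_{\alpha,\beta}$ is the number of double cosets $\langle\sigma_\alpha\rangle\pi\langle\sigma_\beta\rangle$ in $S_n$ with $\langle\sigma_\alpha\rangle\cap\pi\langle\sigma_\beta\rangle\pi^{-1}$ conjugate to $\langle\sigma_\mu\rangle$; equivalently the coefficient of $\mathbf{C}_\mu(\mathbf{z})$ in the Kronecker product $\mathbf{C}_\alpha(\mathbf{z})\star\mathbf{C}_\beta(\mathbf{z})$ of cycle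 index series. *)

theory Defs
  imports "HOL-Combinatorics.Permutations" "HOL-Library.FuncSet"
begin

definition partitions :: "nat \<Rightarrow> nat list set" where
  "partitions n = {mu. sorted_wrt (\<ge>) mu \<and> (\<forall>m\<in>set mu. 0 < m) \<and> sum_list mu = n}"

text \<open>Standard permutation of cycle type mu on {1..n}: cycles (1 .. m1)(m1+1 .. m1+m2)...
  filled in increasing order; identity outside {1..n}.\<close>
fun std_perm_aux :: "nat \<Rightarrow> nat list \<Rightarrow> nat \<Rightarrow> nat" where
  "std_perm_aux off [] = id"
| "std_perm_aux off (m # ms) =
     (\<lambda>i. if off < i \<and> i \<le> off + m then (if i = off + m then off + 1 else i + 1)
          else std_perm_aux (off + m) ms i)"

definition std_perm :: "nat list \<Rightarrow> nat \<Rightarrow> nat" where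
  "std_perm mu = std_perm_aux 0 mu"

definition cyc_group :: "(nat \<Rightarrow> nat) \<Rightarrow> (nat \<Rightarrow> nat) set" where
  "cyc_group s = {s ^^ k | k. True}"

definition double_coset :: "(nat \<Rightarrow> nat) set \<Rightarrow> (nat \<Rightarrow> nat) \<Rightarrow> (nat \<Rightarrow> nat) set \<Rightarrow> (nat \<Rightarrow> nat) set" where
  "double_coset A p B = {a \<circ> p \<circ> b | a b. a \<in> A \<and> b \<in> B}"

definition conj_set :: "(nat \<Rightarrow> nat) \<Rightarrow> (nat \<Rightarrow> nat) set \<Rightarrow> (nat \<Rightarrow> nat) set" where
  "conj_set g B = {g \<circ> x \<circ> inv g | x. x \<in> B}"

definition conjugate_in_Sn :: "nat \<Rightarrow> (nat \<Rightarrow> nat) set \<Rightarrow> (nat \<Rightarrow> nat) set \<Rightarrow> bool" where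
  "conjugate_in_Sn n A B \<longleftrightarrow> (\<exists>g. g permutes {1..n} \<and> A = conj_set g B)"

definition bcoef :: "nat \<Rightarrow> nat list \<Rightarrow> nat list \<Rightarrow> nat list \<Rightarrow> nat" where
  "bcoef n mu alpha beta =
     card {D. \<exists>p. p permutes {1..n} \<and>
               D = double_coset (cyc_group (std_perm alpha)) p (cyc_group (std_perm beta)) \<and>
               conjugate_in_Sn n (cyc_group (std_perm alpha) \<inter> conj_set p (cyc_group (std_perm beta)))
                                 (cyc_group (std_perm mu))}"

text \<open>Structures of X^n/H on U: left cosets l H of bijections l : {1..n} \<rightarrow> U
  (functions taken extensional, i.e. undefined outside {1..n}).\<close>
definition bijs :: "nat \<Rightarrow> 'a set \<Rightarrow> (nat \<Rightarrow> 'a) set" where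
  "bijs n U = {l. bij_betw l {1..n} U \<and> l \<in> extensional {1..n}}"

definition quot_species :: "nat \<Rightarrow> (nat \<Rightarrow> nat) set \<Rightarrow> 'a set \<Rightarrow> (nat \<Rightarrow> 'a) set set" where
  "quot_species n H U = {(\<lambda>h. l \<circ> h) ` H | l. l \<in> bijs n U}"

definition quot_transport :: "nat \<Rightarrow> ('a \<Rightarrow> 'a) \<Rightarrow> (nat \<Rightarrow> 'a) set \<Rightarrow> (nat \<Rightarrow> 'a) set" where
  "quot_transport n s c = (\<lambda>l. restrict (s \<circ> l) {1..n}) ` c"

definition C_sp :: "nat \<Rightarrow> nat list \<Rightarrow> 'a set \<Rightarrow> (nat \<Rightarrow> 'a) set set" where
  "C_sp n mu U = quot_species n (cyc_group (std_perm mu)) U"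

text \<open>The species sum_{mu |- n} a_mu C_mu: a disjoint union of a_mu copies of C_mu.\<close>
definition CEsp :: "nat \<Rightarrow> (nat list \<Rightarrow> nat) \<Rightarrow> 'a set \<Rightarrow> (nat list \<times> nat \<times> (nat \<Rightarrow> 'a) set) set" where
  "CEsp n a U = {(mu, i, c). mu \<in> partitions n \<and> i < a mu \<and> c \<in> C_sp n mu U}"

definition CEsp_transport :: "nat \<Rightarrow> ('a \<Rightarrow> 'a) \<Rightarrow> nat list \<times> nat \<times> (nat \<Rightarrow> 'a) set
    \<Rightarrow> nat list \<times> nat \<times> (nat \<Rightarrow> 'a) set" where
  "CEsp_transport n s x = (case x of (mu, i, c) \<Rightarrow> (mu, i, quot_transport n s c))"

definition prod_species :: "('a set \<Rightarrow> 'b set) \<Rightarrow> ('a set \<Rightarrow> 'c set) \<Rightarrow> 'a set \<Rightarrow> ('b \<times> 'c) set" where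
  "prod_species F G U = F U \<times> G U"

definition prod_transport :: "(('a \<Rightarrow> 'a) \<Rightarrow> 'b \<Rightarrow> 'b) \<Rightarrow> (('a \<Rightarrow> 'a) \<Rightarrow> 'c \<Rightarrow> 'c)
    \<Rightarrow> ('a \<Rightarrow> 'a) \<Rightarrow> 'b \<times> 'c \<Rightarrow> 'b \<times> 'c" where
  "prod_transport trF trG s x = (trF s (fst x), trG s (snd x))"

definition species_iso :: "('a set \<Rightarrow> 'b set) \<Rightarrow> (('a \<Rightarrow> 'a) \<Rightarrow> 'b \<Rightarrow> 'b)
    \<Rightarrow> ('a set \<Rightarrow> 'c set) \<Rightarrow> (('a \<Rightarrow> 'a) \<Rightarrow> 'c \<Rightarrow> 'c) \<Rightarrow> bool" where
  "species_iso F trF G trG \<longleftrightarrow>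
     (\<exists>phi. (\<forall>U. finite U \<longrightarrow> bij_betw (phi U) (F U) (G U)) \<and>
            (\<forall>U V s. finite U \<and> bij_betw s U V \<longrightarrow>
                (\<forall>x\<in>F U. phi V (trF s x) = trG s (phi U x))))"

end

theory Submission
  imports Defs "HOL-Combinatorics.Cycles"
begin



lemma spa_low: "i \<le> off \<Longrightarrow> std_perm_aux off ms i = i"
  by (induction ms arbitrary: off) auto

lemma spa_high: "off + sum_list ms < i \<Longrightarrow> std_perm_aux off ms i = i"
  by (induction ms arbitrary: off) auto

lemma spa_gt: "off < i \<Longrightarrow> off < std_perm_aux off ms i"
proof (induction ms arbitrary: off)
  case (Cons m ms)
  show ?case
  proof (cases "i \<le> off + m")
    case True then show ?thesis using Cons.prems by auto
  next
    case False then show ?thesis using Cons.IH[of "off+m"] by auto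
  qed
qed simp

definition rot :: "nat \<Rightarrow> nat \<Rightarrow> nat \<Rightarrow> nat" where
  "rot off m = (\<lambda>i. if off < i \<and> i \<le> off + m then (if i = off + m then off + 1 else i + 1) else i)"

lemma spa_Cons: "std_perm_aux off (m # ms) = rot off m \<circ> std_perm_aux (off + m) ms"
proof
  fix i
  show "std_perm_aux off (m # ms) i = (rot off m \<circ> std_perm_aux (off + m) ms) i"
  proof (cases "off < i \<and> i \<le> off + m")
    case True then show ?thesis by (simp add: spa_low rot_def)
  next
    case False
    show ?thesis
    proof (cases "i \<le> off")
      case True then show ?thesis using False by (simp add: spa_low rot_def)
    next
      case F2: False
      then have "off + m < i" using False by auto
      then have "off + m < std_perm_aux (off + m) ms i" by (rule spa_gt)
      then show ?thesis using False \<open>off + m < i\<close> by (simp add: rot_def)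
    qed
  qed
qed

lemma rot_permutes: "rot off m permutes {off<..off+m}"
proof (rule bij_imp_permutes)
  have inj: "inj_on (rot off m) {off<..off+m}"
    by (auto simp: inj_on_def rot_def split: if_splits)
  have sub: "rot off m ` {off<..off+m} \<subseteq> {off<..off+m}"
    by (auto simp: rot_def)
  show "bij_betw (rot off m) {off<..off+m} {off<..off+m}"
    using endo_inj_surj[OF _ sub inj] inj by (simp add: bij_betw_def)
  show "\<And>x. x \<notin> {off<..off + m} \<Longrightarrow> rot off m x = x" by (auto simp: rot_def)
qed

lemma spa_permutes: "std_perm_aux off ms permutes {off<..off + sum_list ms}"
proof (induction ms arbitrary: off)
  case Nil then show ?case unfolding std_perm_aux.simps by (rule permutes_id)
next
  case (Cons m ms)
  have a: "rot off m permutes {off<..off + sum_list (m#ms)}"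
    by (rule permutes_subset[OF rot_permutes]) auto
  have b: "std_perm_aux (off+m) ms permutes {off<..off + sum_list (m#ms)}"
    by (rule permutes_subset[OF Cons.IH]) auto
  show ?case unfolding spa_Cons by (rule permutes_compose[OF b a])
qed

lemma std_perm_permutes: "mu \<in> partitions n \<Longrightarrow> std_perm mu permutes {1..n}"
proof -
  assume "mu \<in> partitions n"
  then have "sum_list mu = n" by (simp add: partitions_def)
  moreover have "{0<..n} = {1..n}" by auto
  ultimately show ?thesis using spa_permutes[of 0 mu] by (simp add: std_perm_def)
qed

lemma rot_funpow:
  assumes "off < i" "i \<le> off + m"
  shows "(rot off m ^^ k) i = off + 1 + ((i - off - 1 + k) mod m)"
proof (induction k)
  case 0 then show ?case using assms by simp
next
  case (Suc k)
  have m0: "m > 0" using assms by auto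
  let ?r = "(i - off - 1 + k) mod m"
  have r: "?r < m" using m0 by simp
  have "(rot off m ^^ Suc k) i = rot off m (off + 1 + ?r)" using Suc by simp
  also have "\<dots> = off + 1 + ((?r + 1) mod m)"
  proof (cases "?r + 1 = m")
    case True then show ?thesis using r by (simp add: rot_def)
  next
    case False then have "?r + 1 < m" using r by simp
    then show ?thesis by (simp add: rot_def)
  qed
  also have "(?r + 1) mod m = (i - off - 1 + Suc k) mod m"
    by (simp add: mod_Suc_eq)
  finally show ?case .
qed




definition pgrp :: "nat \<Rightarrow> (nat \<Rightarrow> nat) set \<Rightarrow> bool" where
  "pgrp n G \<longleftrightarrow> G \<subseteq> {p. p permutes {1..n}} \<and> id \<in> G \<and> (\<forall>a\<in>G. \<forall>b\<in>G. a \<circ> b \<in> G)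
     \<and> (\<forall>a\<in>G. inv a \<in> G)"

definition cj :: "(nat \<Rightarrow> nat) \<Rightarrow> (nat \<Rightarrow> nat) \<Rightarrow> (nat \<Rightarrow> nat)" where
  "cj g x = g \<circ> x \<circ> inv g"

lemma conj_set_eq: "conj_set g B = cj g ` B"
  by (auto simp: conj_set_def cj_def)

lemma pgrp_perm: "pgrp n G \<Longrightarrow> a \<in> G \<Longrightarrow> a permutes {1..n}"
  by (auto simp: pgrp_def)
lemma pgrp_id: "pgrp n G \<Longrightarrow> id \<in> G"
  by (auto simp: pgrp_def)
lemma pgrp_comp: "pgrp n G \<Longrightarrow> a \<in> G \<Longrightarrow> b \<in> G \<Longrightarrow> a \<circ> b \<in> G"
  by (auto simp: pgrp_def)
lemma pgrp_inv: "pgrp n G \<Longrightarrow> a \<in> G \<Longrightarrow> inv a \<in> G"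
  by (auto simp: pgrp_def)
lemma pgrp_bij: "pgrp n G \<Longrightarrow> a \<in> G \<Longrightarrow> bij a"
  by (auto simp: pgrp_def permutes_bij)
lemma pgrp_finite: "pgrp n G \<Longrightarrow> finite G"
  by (rule finite_subset[of _ "{p. p permutes {1..n}}"]) (auto simp: pgrp_def finite_permutations)

lemma bij_inv_o: "bij a \<Longrightarrow> inv a \<circ> a = id"
  by (simp add: bij_is_inj)
lemma bij_o_inv: "bij a \<Longrightarrow> a \<circ> inv a = id"
  using bij_is_surj surj_iff by blast

lemma cyc_pgrp:
  assumes s: "s permutes {1..n}"
  shows "pgrp n (cyc_group s)"
proof -
  have "permutation s" using s by (metis finite_atLeastAtMost permutation_permutes)
  then obtain N where N: "s ^^ N = id" "N > 0" by (rule permutation_is_nilpotent)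
  have inv: "inv (s ^^ k) = s ^^ (N * k - k)" for k
  proof -
    have nk: "N * k - k + k = N * k" proof - have "k \<le> N * k" using N(2) by simp then show ?thesis by simp qed
    have "s ^^ (N * k) = id" using N(1) by (metis funpow_mult id_funpow mult.commute)
    then have e1: "s ^^ (N * k - k) \<circ> s ^^ k = id" and e2: "s ^^ k \<circ> s ^^ (N * k - k) = id"
      using nk by (metis funpow_add, metis funpow_add add.commute)
    show ?thesis using inv_unique_comp[OF e2 e1] .
  qed
  show ?thesis unfolding pgrp_def cyc_group_def
  proof (intro conjI ballI)
    show "{s ^^ k |k. True} \<subseteq> {p. p permutes {1..n}}" using permutes_funpow[OF s] by auto
    show "id \<in> {s ^^ k |k. True}" by (rule CollectI, rule exI[of _ 0]) simp
    fix a b assume "a \<in> {s ^^ k |k. True}" "b \<in> {s ^^ k |k. True}"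
    then show "a \<circ> b \<in> {s ^^ k |k. True}" by (auto simp: funpow_add[symmetric])
  next
    fix a assume "a \<in> {s ^^ k |k. True}"
    then show "inv a \<in> {s ^^ k |k. True}" using inv by auto
  qed
qed

lemma pgrp_Int: "pgrp n H \<Longrightarrow> pgrp n K \<Longrightarrow> pgrp n (H \<inter> K)"
  by (auto simp: pgrp_def)

lemma cj_comp: "bij g \<Longrightarrow> cj g (a \<circ> b) = cj g a \<circ> cj g b"
  by (simp add: cj_def comp_assoc bij_inv_o) (metis comp_assoc bij_inv_o comp_id)

lemma cj_id: "bij g \<Longrightarrow> cj g id = id"
  by (simp add: cj_def bij_o_inv)

lemma cj_cj: "bij g \<Longrightarrow> bij h \<Longrightarrow> cj g (cj h x) = cj (g \<circ> h) x"
  by (simp add: cj_def o_inv_distrib comp_assoc)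

lemma cj_inv_cancel: "bij g \<Longrightarrow> cj (inv g) (cj g x) = x"
  by (simp add: cj_def bij_imp_bij_inv inv_inv_eq comp_assoc[symmetric] bij_inv_o)
     (simp add: comp_assoc bij_inv_o)

lemma cj_cancel_inv: "bij g \<Longrightarrow> cj g (cj (inv g) x) = x"
  by (simp add: cj_def bij_imp_bij_inv inv_inv_eq comp_assoc[symmetric] bij_o_inv)
     (simp add: comp_assoc bij_o_inv)

lemma inj_cj: "bij g \<Longrightarrow> inj (cj g)"
  by (metis cj_inv_cancel injI)

lemma cj_inv: "bij g \<Longrightarrow> bij a \<Longrightarrow> inv (cj g a) = cj g (inv a)"
  by (simp add: cj_def o_inv_distrib bij_imp_bij_inv bij_comp inv_inv_eq comp_assoc)

lemma cj_permutes: "g permutes S \<Longrightarrow> a permutes S \<Longrightarrow> cj g a permutes S"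
  unfolding cj_def by (intro permutes_compose permutes_inv) auto

lemma pgrp_cj:
  assumes K: "pgrp n K" and p: "p permutes {1..n}"
  shows "pgrp n (cj p ` K)"
  unfolding pgrp_def
proof (intro conjI ballI)
  have bp: "bij p" using p permutes_bij by blast
  show "cj p ` K \<subseteq> {p. p permutes {1..n}}" using cj_permutes[OF p] pgrp_perm[OF K] by auto
  show "id \<in> cj p ` K" using cj_id[OF bp] pgrp_id[OF K] by (metis image_eqI)
  fix a b assume "a \<in> cj p ` K" "b \<in> cj p ` K"
  then show "a \<circ> b \<in> cj p ` K" using pgrp_comp[OF K] by (auto simp: cj_comp[OF bp, symmetric])
next
  have bp: "bij p" using p permutes_bij by blast
  fix a assume "a \<in> cj p ` K"
  then show "inv a \<in> cj p ` K" using cj_inv[OF bp] pgrp_inv[OF K] pgrp_bij[OF K] by auto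
qed

lemma pgrp_cj_self:
  assumes G: "pgrp n G" and g: "g \<in> G"
  shows "cj g ` G = G"
proof
  have bg: "bij g" using pgrp_bij[OF G g] .
  show "cj g ` G \<subseteq> G" using G g by (auto simp: cj_def intro!: pgrp_comp pgrp_inv)
  show "G \<subseteq> cj g ` G"
  proof
    fix x assume x: "x \<in> G"
    have "cj (inv g) x \<in> G" using G g x bij_imp_bij_inv[OF bg]
      by (auto simp: cj_def inv_inv_eq[OF bg] intro!: pgrp_comp pgrp_inv)
    then show "x \<in> cj g ` G" using cj_cancel_inv[OF bg, of x] by (metis image_eqI)
  qed
qed

lemma cj_funpow: "bij g \<Longrightarrow> cj g s ^^ k = cj g (s ^^ k)"
  by (induction k) (simp_all add: cj_id cj_comp)

lemma cyc_cj: "bij g \<Longrightarrow> cyc_group (cj g s) = cj g ` cyc_group s"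
  by (auto simp: cyc_group_def cj_funpow)




lemma sub_cyc:
  assumes L: "pgrp n L" and sub: "L \<subseteq> cyc_group s" and s: "s permutes {1..n}"
  shows "\<exists>d. L = cyc_group (s ^^ d)"
proof -
  have "permutation s" using s by (metis finite_atLeastAtMost permutation_permutes)
  then obtain N where N: "s ^^ N = id" "N > 0" by (rule permutation_is_nilpotent)
  have ex: "0 < N \<and> s ^^ N \<in> L" using N pgrp_id[OF L] by simp
  define d where "d = (LEAST d. 0 < d \<and> s ^^ d \<in> L)"
  have d: "0 < d" "s ^^ d \<in> L" using LeastI[of "\<lambda>d. 0 < d \<and> s ^^ d \<in> L", OF ex] by (auto simp: d_def)
  have pw: "(s ^^ d) ^^ k \<in> L" for k
  proof (induction k)
    case 0 then show ?case using pgrp_id[OF L] by (simp only: funpow.simps(1))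
  next
    case (Suc k) then show ?case using pgrp_comp[OF L d(2)] by (simp only: funpow.simps(2))
  qed
  have "L = cyc_group (s ^^ d)"
  proof
    show "cyc_group (s ^^ d) \<subseteq> L" using pw by (auto simp: cyc_group_def)
    show "L \<subseteq> cyc_group (s ^^ d)"
    proof
      fix h assume h: "h \<in> L"
      then obtain j where j: "h = s ^^ j" using sub by (auto simp: cyc_group_def)
      define r where "r = j mod d"
      define q where "q = j div d"
      have jj: "j = r + d * q" by (simp add: r_def q_def)
      have sp: "s ^^ j = s ^^ r \<circ> s ^^ (d * q)" using jj by (simp add: funpow_add)
      have b: "bij (s ^^ (d * q))" using permutes_funpow[OF s] permutes_bij by blast
      have "s ^^ r = s ^^ j \<circ> inv (s ^^ (d * q))"
        using sp bij_o_inv[OF b] by (simp add: comp_assoc)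
      moreover have "inv (s ^^ (d * q)) \<in> L"
        using pw[of q] pgrp_inv[OF L] by (simp add: funpow_mult)
      ultimately have "s ^^ r \<in> L" using h j pgrp_comp[OF L] by simp
      moreover have "r < d" using d(1) by (simp add: r_def)
      ultimately have "r = 0" using not_less_Least[of r "\<lambda>d. 0 < d \<and> s ^^ d \<in> L"]
        by (auto simp: d_def)
      then have "h = (s ^^ d) ^^ q" using j jj by (simp add: funpow_mult)
      then show "h \<in> cyc_group (s ^^ d)" by (auto simp: cyc_group_def)
    qed
  qed
  then show ?thesis by blast
qed

definition gorb :: "(nat \<Rightarrow> nat) set \<Rightarrow> nat \<Rightarrow> nat set" where
  "gorb G x = (\<lambda>h. h x) ` G"

definition osz :: "nat \<Rightarrow> (nat \<Rightarrow> nat) set \<Rightarrow> nat multiset" where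
  "osz n G = image_mset (\<lambda>x. card (gorb G x)) (mset_set {1..n})"

lemma gorb_cj: "gorb (cj g ` G) y = g ` gorb G (inv g y)"
  by (auto simp: gorb_def cj_def image_iff)

lemma osz_cj:
  assumes g: "g permutes {1..n}"
  shows "osz n (cj g ` G) = osz n G"
proof -
  have ig: "inv g permutes {1..n}" using permutes_inv[OF g] .
  have ing: "inj g" using g permutes_inj by blast
  have "osz n (cj g ` G) = image_mset (\<lambda>y. card (gorb G (inv g y))) (mset_set {1..n})"
    unfolding osz_def gorb_cj using card_image[OF inj_on_subset[OF ing]] by simp
  also have "\<dots> = image_mset (\<lambda>x. card (gorb G x)) (image_mset (inv g) (mset_set {1..n}))"
    by (simp add: multiset.map_comp comp_def)
  also have "image_mset (inv g) (mset_set {1..n}) = mset_set {1..n}"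
    using image_mset_mset_set[OF inj_on_subset[OF permutes_inj[OF ig]]] permutes_image[OF ig]
    by simp
  finally show ?thesis by (simp add: osz_def)
qed

lemma gorb_cyc: "gorb (cyc_group s) x = range (\<lambda>k. (s ^^ k) x)"
  by (auto simp: gorb_def cyc_group_def)

lemma spa_blockA:
  assumes "off < x" "x \<le> off + m"
  shows "(std_perm_aux off (m # ms) ^^ k) x = (rot off m ^^ k) x"
proof (induction k)
  case (Suc k)
  have "(rot off m ^^ k) x \<in> {off<..off+m}"
    using permutes_in_image[OF permutes_funpow[OF rot_permutes]] assms by simp
  moreover have e: "std_perm_aux off (m # ms) y = rot off m y" if "y \<in> {off<..off+m}" for y
    using that by (simp add: rot_def)
  ultimately show ?case using Suc by (simp del: std_perm_aux.simps)
qed simp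

lemma spa_blockB:
  assumes "off + m < x"
  shows "(std_perm_aux off (m # ms) ^^ k) x = (std_perm_aux (off + m) ms ^^ k) x
       \<and> off + m < (std_perm_aux (off + m) ms ^^ k) x"
proof (induction k)
  case (Suc k)
  then have gt: "off + m < std_perm_aux (off + m) ms ((std_perm_aux (off + m) ms ^^ k) x)"
    using spa_gt by blast
  then show ?case using Suc by (simp add: spa_Cons rot_def)
qed (use assms in simp)

lemma rot_orbit:
  assumes "off < x" "x \<le> off + m"
  shows "range (\<lambda>k. (rot off m ^^ k) x) = {off<..off+m}"
proof
  show "range (\<lambda>k. (rot off m ^^ k) x) \<subseteq> {off<..off+m}"
    using permutes_in_image[OF permutes_funpow[OF rot_permutes]] assms by auto
  show "{off<..off+m} \<subseteq> range (\<lambda>k. (rot off m ^^ k) x)"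
  proof
    fix y assume y: "y \<in> {off<..off+m}"
    define r where "r = y - off - 1"
    define s where "s = x - off - 1"
    have rs: "r < m" "s < m" using y assms by (auto simp: r_def s_def)
    have "(s + (r + m - s)) mod m = r" using rs by simp
    then have "(rot off m ^^ (r + m - s)) x = y"
      using rot_funpow[OF assms] y by (simp add: r_def s_def)
    then show "y \<in> range (\<lambda>k. (rot off m ^^ k) x)" by (metis rangeI)
  qed
qed

lemma osz_aux:
  "image_mset (\<lambda>x. card (gorb (cyc_group (std_perm_aux off ms)) x)) (mset_set {off<..off + sum_list ms})
   = sum_list (map (\<lambda>m. replicate_mset m m) ms)"
proof (induction ms arbitrary: off)
  case Nil then show ?case by simp
next
  case (Cons m ms)
  have split: "{off<..off + sum_list (m # ms)} = {off<..off+m} \<union> {off+m<..off+m+sum_list ms}"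
    by auto
  have ms: "mset_set {off<..off + sum_list (m # ms)} = mset_set {off<..off+m} + mset_set {off+m<..off+m+sum_list ms}"
    unfolding split by (rule mset_set_Union) auto
  have A: "image_mset (\<lambda>x. card (gorb (cyc_group (std_perm_aux off (m#ms))) x)) (mset_set {off<..off+m})
      = replicate_mset m m"
  proof -
    have "image_mset (\<lambda>x. card (gorb (cyc_group (std_perm_aux off (m#ms))) x)) (mset_set {off<..off+m})
       = image_mset (\<lambda>x. m) (mset_set {off<..off+m})"
    proof (rule image_mset_cong)
      fix x assume "x \<in># mset_set {off<..off+m}"
      then have x: "off < x" "x \<le> off + m" by auto
      show "card (gorb (cyc_group (std_perm_aux off (m#ms))) x) = m"
        unfolding gorb_cyc spa_blockA[OF x] rot_orbit[OF x] by simp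
    qed
    then show ?thesis by (simp add: image_mset_const_eq)
  qed
  have B: "image_mset (\<lambda>x. card (gorb (cyc_group (std_perm_aux off (m#ms))) x)) (mset_set {off+m<..off+m+sum_list ms})
      = image_mset (\<lambda>x. card (gorb (cyc_group (std_perm_aux (off+m) ms)) x)) (mset_set {off+m<..off+m+sum_list ms})"
  proof (rule image_mset_cong)
    fix x assume "x \<in># mset_set {off+m<..off+m+sum_list ms}"
    then have x: "off + m < x" by auto
    show "card (gorb (cyc_group (std_perm_aux off (m#ms))) x) = card (gorb (cyc_group (std_perm_aux (off+m) ms)) x)"
      unfolding gorb_cyc using spa_blockB[OF x] by simp
  qed
  show ?case unfolding ms image_mset_union A B Cons.IH by simp
qed

lemma osz_std:
  assumes "mu \<in> partitions n"
  shows "osz n (cyc_group (std_perm mu)) = sum_list (map (\<lambda>m. replicate_mset m m) mu)"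
proof -
  have "sum_list mu = n" using assms by (simp add: partitions_def)
  moreover have "{0<..n} = {1..n}" by auto
  ultimately show ?thesis using osz_aux[of 0 mu] by (simp add: osz_def std_perm_def)
qed

lemma count_rep_sum: "count (sum_list (map (\<lambda>m. replicate_mset m m) ms)) k = k * count (mset ms) k"
  by (induction ms) auto

lemma partition_unique:
  assumes mu: "mu \<in> partitions n" and nu: "nu \<in> partitions n"
    and eq: "osz n (cyc_group (std_perm mu)) = osz n (cyc_group (std_perm nu))"
  shows "mu = nu"
proof -
  have c: "k * count (mset mu) k = k * count (mset nu) k" for k
    using eq unfolding osz_std[OF mu] osz_std[OF nu] by (metis count_rep_sum)
  have "mset mu = mset nu"
  proof (rule multiset_eqI)
    fix k show "count (mset mu) k = count (mset nu) k"
    proof (cases "k = 0")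
      case True
      then have "k \<notin> set mu" "k \<notin> set nu" using mu nu by (auto simp: partitions_def)
      then show ?thesis by (metis count_eq_zero_iff set_mset_mset)
    next
      case False then show ?thesis using c[of k] by simp
    qed
  qed
  then have m: "mset (rev mu) = mset (rev nu)" by simp
  have s1: "sorted (rev mu)" "sorted (rev nu)" using mu nu
    by (auto simp: partitions_def sorted_wrt_rev)
  have "sort (rev nu) = rev mu" using properties_for_sort[OF m s1(1)] .
  moreover have "sort (rev nu) = rev nu" using s1(2) by (simp add: sorted_sort_id)
  ultimately show ?thesis by simp
qed




lemma funpow_restrict_id:
  assumes "f ` A \<subseteq> A" "x \<in> A"
  shows "(restrict_id f A ^^ k) x = (f ^^ k) x \<and> (f ^^ k) x \<in> A"
proof (induction k)
  case (Suc k) then show ?case using assms by auto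
qed (use assms in simp)

lemma least_power_restrict_id:
  assumes "f ` A \<subseteq> A" "x \<in> A"
  shows "least_power (restrict_id f A) x = least_power f x"
  unfolding least_power_def using funpow_restrict_id[OF assms] by simp

lemma conj_std_gen:
  assumes "finite S" "f permutes S"
  shows "\<exists>ms g. (\<forall>m\<in>set ms. 0 < m) \<and> sum_list ms = card S \<and> sorted_wrt (\<ge>) ms
     \<and> (\<forall>m\<in>set ms. \<exists>x\<in>S. m = least_power f x)
     \<and> bij_betw g {off<..off + card S} S
     \<and> (\<forall>i\<in>{off<..off + card S}. f (g i) = g (std_perm_aux off ms i))"
  using assms
proof (induction "card S" arbitrary: S f off rule: less_induct)
  case less
  note fin = less.prems(1) and fS = less.prems(2)
  show ?case
  proof (cases "S = {}")
    case True then show ?thesis by (intro exI[of _ "[]"]) (auto simp: bij_betw_def)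
  next
    case False
    have perm: "permutation f" using fin fS permutation_permutes by blast
    have injf: "inj f" using fS permutes_inj by blast
    define m where "m = Max (least_power f ` S)"
    have "m \<in> least_power f ` S" unfolding m_def using fin False by (intro Max_in) auto
    then obtain x0 where x0: "x0 \<in> S" "least_power f x0 = m" by auto
    have m0: "0 < m" using least_power_of_permutation(2)[OF perm, of x0] x0 by simp
    have fm: "(f ^^ m) x0 = x0" using least_power_of_permutation(1)[OF perm, of x0] x0 by simp
    define Ob where "Ob = (\<lambda>k. (f ^^ k) x0) ` {..<m}"
    have injO: "inj_on (\<lambda>k. (f ^^ k) x0) {..<m}"
    proof (rule inj_onI)
      fix i j assume ij: "i \<in> {..<m}" "j \<in> {..<m}" "(f ^^ i) x0 = (f ^^ j) x0"
      show "i = j"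
      proof (rule ccontr)
        assume "i \<noteq> j"
        then consider "i < j" | "j < i" by linarith
        then show False
        proof cases
          case 1
          then have "(f ^^ (j - i)) x0 = x0" using funpow_diff[OF injf, of i j x0] ij by simp
          then have "m \<le> j - i" using least_power_le[where f=f and n="j - i" and x=x0] 1 x0 by simp
          then show False using ij 1 by simp
        next
          case 2
          then have "(f ^^ (i - j)) x0 = x0" using funpow_diff[OF injf, of j i x0] ij by simp
          then have "m \<le> i - j" using least_power_le[where f=f and n="i - j" and x=x0] 2 x0 by simp
          then show False using ij 2 by simp
        qed
      qed
    qed
    have cardO: "card Ob = m" using card_image[OF injO] by (simp add: Ob_def)
    have OS: "Ob \<subseteq> S" using permutes_in_image[OF permutes_funpow[OF fS]] x0 by (auto simp: Ob_def)
    have finO: "finite Ob" by (simp add: Ob_def)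
    have fO: "f ` Ob \<subseteq> Ob"
    proof
      fix y assume "y \<in> f ` Ob"
      then obtain k where k: "k < m" "y = f ((f ^^ k) x0)" by (auto simp: Ob_def)
      then have y: "y = (f ^^ Suc k) x0" by simp
      show "y \<in> Ob"
      proof (cases "Suc k = m")
        case True then show ?thesis using y fm m0 by (auto simp: Ob_def intro!: image_eqI[of _ _ 0])
      next
        case False then have "Suc k < m" using k by simp
        then show ?thesis using y unfolding Ob_def by (intro image_eqI[of _ _ "Suc k"]) auto
      qed
    qed
    have fO': "f ` Ob = Ob" using endo_inj_surj[OF finO fO inj_on_subset[OF injf]] by simp
    define S' where "S' = S - Ob"
    have fS'1: "f ` S' = S'" unfolding S'_def using image_set_diff[OF injf] fO' permutes_image[OF fS] by simp
    have bS': "bij_betw f S' S'" using fS'1 inj_on_subset[OF injf] by (simp add: bij_betw_def)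
    define f' where "f' = restrict_id f S'"
    have f'p: "f' permutes S'" unfolding f'_def by (rule permutes_restrict_id[OF bS'])
    have finS': "finite S'" using fin by (simp add: S'_def)
    have cardS': "card S' = card S - m" using card_Diff_subset[OF finO OS] cardO by (simp add: S'_def)
    have mS: "m \<le> card S" using card_mono[OF fin OS] cardO by simp
    have lt: "card S' < card S" using cardS' m0 mS by simp
    obtain ms' g' where IH: "(\<forall>m\<in>set ms'. 0 < m)" "sum_list ms' = card S'" "sorted_wrt (\<ge>) ms'"
        "(\<forall>m\<in>set ms'. \<exists>x\<in>S'. m = least_power f' x)"
        "bij_betw g' {off + m<..off + m + card S'} S'"
        "(\<forall>i\<in>{off + m<..off + m + card S'}. f' (g' i) = g' (std_perm_aux (off + m) ms' i))"
      using less.hyps[OF lt finS' f'p, of "off + m"] by blast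
    have lpS': "least_power f' x = least_power f x" if "x \<in> S'" for x
      unfolding f'_def by (rule least_power_restrict_id) (use fS'1 that in auto)
    define g where "g = (\<lambda>i. if i \<le> off + m then (f ^^ (i - off - 1)) x0 else g' i)"
    define ms where "ms = m # ms'"
    have c1: "\<forall>m\<in>set ms. 0 < m" using IH(1) m0 by (simp add: ms_def)
    have c2: "sum_list ms = card S" using IH(2) cardS' mS by (simp add: ms_def)
    have c3: "sorted_wrt (\<ge>) ms"
    proof -
      have "y \<le> m" if yms: "y \<in> set ms'" for y
      proof -
        obtain x where x: "x \<in> S'" "y = least_power f' x" using bexE[OF bspec[OF IH(4) yms]] by metis
        have xS: "x \<in> S" using x(1) unfolding S'_def by blast
        have "y = least_power f x" using x lpS'[OF x(1)] by simp
        moreover have "least_power f x \<le> m" unfolding m_def using fin xS by (intro Max_ge) auto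
        ultimately show ?thesis by simp
      qed
      then show ?thesis using IH(3) unfolding ms_def by simp
    qed
    have c4: "\<forall>m\<in>set ms. \<exists>x\<in>S. m = least_power f x"
    proof -
      have "\<exists>x\<in>S. y = least_power f x" if yms: "y \<in> set ms'" for y
      proof -
        obtain x where x: "x \<in> S'" "y = least_power f' x" using bexE[OF bspec[OF IH(4) yms]] by metis
        then have "x \<in> S" by (simp add: S'_def)
        then show ?thesis using x lpS'[OF x(1)] by metis
      qed
      then show ?thesis using x0 by (auto simp: ms_def)
    qed
    have split: "{off<..off + card S} = {off<..off+m} \<union> {off + m<..off + m + card S'}"
      using cardS' mS by auto
    have SU: "S = Ob \<union> S'" using OS by (auto simp: S'_def)
    have bA: "bij_betw g {off<..off+m} Ob"
    proof -
      have "inj_on g {off<..off+m}"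
      proof (rule inj_onI)
        fix i j assume i: "i \<in> {off<..off+m}" and j: "j \<in> {off<..off+m}" and e: "g i = g j"
        then have "(f ^^ (i - off - 1)) x0 = (f ^^ (j - off - 1)) x0" by (simp add: g_def)
        then have "i - off - 1 = j - off - 1" using injO i j by (auto dest: inj_onD)
        then show "i = j" using i j by (simp, linarith)
      qed
      moreover have "g ` {off<..off+m} = Ob"
      proof
        show "g ` {off<..off+m} \<subseteq> Ob" by (auto simp: g_def Ob_def)
        show "Ob \<subseteq> g ` {off<..off+m}"
        proof
          fix y assume "y \<in> Ob"
          then obtain k where k: "k < m" "y = (f ^^ k) x0" by (auto simp: Ob_def)
          then have "g (k + off + 1) = y" by (simp add: g_def)
          moreover have "k + off + 1 \<in> {off<..off+m}" using k by simp
          ultimately show "y \<in> g ` {off<..off+m}" by (metis image_eqI)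
        qed
      qed
      ultimately show ?thesis by (simp add: bij_betw_def)
    qed
    have bB: "bij_betw g {off + m<..off + m + card S'} S'"
      using IH(5) by (rule bij_betw_cong[THEN iffD1, rotated]) (auto simp: g_def)
    have c5: "bij_betw g {off<..off + card S} S"
    proof -
      have comb: "bij_betw g ({off<..off+m} \<union> {off + m<..off + m + card S'}) (Ob \<union> S')"
        by (rule bij_betw_combine[OF bA bB]) (auto simp: S'_def)
      show ?thesis unfolding split using comb SU by metis
    qed
    have c6: "\<forall>i\<in>{off<..off + card S}. f (g i) = g (std_perm_aux off ms i)"
    proof
      fix i assume i: "i \<in> {off<..off + card S}"
      show "f (g i) = g (std_perm_aux off ms i)"
      proof (cases "i \<le> off + m")
        case True
        have fg: "f (g i) = (f ^^ (i - off)) x0"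
          using True i by (simp add: g_def) (metis Suc_diff_Suc Suc_eq_plus1 funpow.simps(2) o_apply
             add_Suc_right diff_Suc_Suc)
        show ?thesis
        proof (cases "i = off + m")
          case True
          then have "std_perm_aux off ms i = off + 1" using m0 by (simp add: ms_def)
          then show ?thesis using fg True fm m0 by (simp add: g_def)
        next
          case False
          then have "std_perm_aux off ms i = i + 1" using \<open>i \<le> off + m\<close> i by (simp add: ms_def)
          moreover have "i + 1 - off - 1 = i - off" using i by simp
          ultimately show ?thesis using fg False \<open>i \<le> off + m\<close> by (simp add: g_def)
        qed
      next
        case False
        then have i2: "i \<in> {off + m<..off + m + card S'}" using i split by auto
        have e: "std_perm_aux off ms i = std_perm_aux (off + m) ms' i" using False by (simp add: ms_def)
        have j: "std_perm_aux (off + m) ms' i \<in> {off + m<..off + m + card S'}"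
          using permutes_in_image[OF spa_permutes[of "off + m" ms']] i2 IH(2) by simp
        have gi: "g' i \<in> S'" using bij_betwE[OF IH(5)] i2 by blast
        have "f (g i) = f' (g' i)" using False gi by (simp add: g_def f'_def)
        also have "\<dots> = g' (std_perm_aux (off + m) ms' i)" using IH(6) i2 by blast
        also have "\<dots> = g (std_perm_aux off ms i)" using e j by (simp add: g_def)
        finally show ?thesis .
      qed
    qed
    show ?thesis using c1 c2 c3 c4 c5 c6 by blast
  qed
qed

lemma conj_std:
  assumes f: "f permutes {1..n}"
  shows "\<exists>mu\<in>partitions n. \<exists>g. g permutes {1..n} \<and> f = cj g (std_perm mu)"
proof -
  obtain ms g0 where G: "(\<forall>m\<in>set ms. 0 < m)" "sum_list ms = card {1..n}" "sorted_wrt (\<ge>) ms"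
      "bij_betw g0 {0<..0 + card {1..n}} {1..n}"
      "(\<forall>i\<in>{0<..0 + card {1..n}}. f (g0 i) = g0 (std_perm_aux 0 ms i))"
    using conj_std_gen[OF _ f, of 0] by auto
  have e: "{0<..0 + card {1..n}} = {1..n}" by auto
  have mu: "ms \<in> partitions n" using G by (simp add: partitions_def)
  have bg: "bij_betw g0 {1..n} {1..n}" using G(4) e by simp
  define g where "g = restrict_id g0 {1..n}"
  have gp: "g permutes {1..n}" unfolding g_def by (rule permutes_restrict_id[OF bg])
  have sp: "std_perm ms permutes {1..n}" using std_perm_permutes[OF mu] .
  have comm: "f \<circ> g = g \<circ> std_perm ms"
  proof
    fix i show "(f \<circ> g) i = (g \<circ> std_perm ms) i"
    proof (cases "i \<in> {1..n}")
      case True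
      then have "std_perm ms i \<in> {1..n}" using permutes_in_image[OF sp] by simp
      then show ?thesis using True G(5) e by (simp add: g_def std_perm_def)
    next
      case False
      then show ?thesis using permutes_not_in[OF f] permutes_not_in[OF sp] by (simp add: g_def)
    qed
  qed
  have "f = f \<circ> g \<circ> inv g" using bij_o_inv[OF permutes_bij[OF gp]] by (simp add: comp_assoc)
  also have "\<dots> = cj g (std_perm ms)" using comm by (simp add: cj_def)
  finally show ?thesis using mu gp by blast
qed





lemma dc_memI: "a \<in> H \<Longrightarrow> b \<in> K \<Longrightarrow> x = a \<circ> p \<circ> b \<Longrightarrow> x \<in> double_coset H p K"
  by (auto simp: double_coset_def)

lemma dc_self: "pgrp n H \<Longrightarrow> pgrp n K \<Longrightarrow> p \<in> double_coset H p K"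
  by (rule dc_memI[of id _ id]) (auto intro: pgrp_id)

lemma dc_memE:
  assumes "x \<in> double_coset H p K"
  obtains a b where "a \<in> H" "b \<in> K" "x = a \<circ> p \<circ> b"
  using assms by (auto simp: double_coset_def)

lemma dc_elem_perm:
  assumes H: "pgrp n H" and K: "pgrp n K" and p: "p permutes {1..n}" and q: "q \<in> double_coset H p K"
  shows "q permutes {1..n}"
proof -
  obtain a b where ab: "a \<in> H" "b \<in> K" "q = a \<circ> p \<circ> b" using q by (rule dc_memE)
  show ?thesis unfolding ab(3)
    by (intro permutes_compose p pgrp_perm[OF H ab(1)] pgrp_perm[OF K ab(2)])
qed

lemma dc_eq:
  assumes H: "pgrp n H" and K: "pgrp n K" and q: "q \<in> double_coset H p K"
  shows "double_coset H q K = double_coset H p K"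
proof -
  obtain a b where ab: "a \<in> H" "b \<in> K" "q = a \<circ> p \<circ> b" using q by (rule dc_memE)
  have ia: "inv a \<circ> a = id" using bij_inv_o[OF pgrp_bij[OF H ab(1)]] .
  have ib: "b \<circ> inv b = id" using bij_o_inv[OF pgrp_bij[OF K ab(2)]] .
  have p: "p = inv a \<circ> q \<circ> inv b"
  proof -
    have "inv a \<circ> q \<circ> inv b = (inv a \<circ> a) \<circ> p \<circ> (b \<circ> inv b)" using ab(3) by (simp add: comp_assoc)
    then show ?thesis using ia ib by simp
  qed
  show ?thesis
  proof
    show "double_coset H q K \<subseteq> double_coset H p K"
    proof
      fix x assume "x \<in> double_coset H q K"
      then obtain a' b' where x: "a' \<in> H" "b' \<in> K" "x = a' \<circ> q \<circ> b'" by (rule dc_memE)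
      have "x = (a' \<circ> a) \<circ> p \<circ> (b \<circ> b')" using x(3) ab(3) by (simp add: comp_assoc)
      then show "x \<in> double_coset H p K"
        by (rule dc_memI[OF pgrp_comp[OF H x(1) ab(1)] pgrp_comp[OF K ab(2) x(2)]])
    qed
    show "double_coset H p K \<subseteq> double_coset H q K"
    proof
      fix x assume "x \<in> double_coset H p K"
      then obtain a' b' where x: "a' \<in> H" "b' \<in> K" "x = a' \<circ> p \<circ> b'" by (rule dc_memE)
      have "x = (a' \<circ> inv a) \<circ> q \<circ> (inv b \<circ> b')" using x(3) p by (simp add: comp_assoc)
      then show "x \<in> double_coset H q K"
        by (rule dc_memI[OF pgrp_comp[OF H x(1) pgrp_inv[OF H ab(1)]] pgrp_comp[OF K pgrp_inv[OF K ab(2)] x(2)]])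
    qed
  qed
qed

lemma dc_indep:
  assumes H: "pgrp n H" and K: "pgrp n K" and p: "p permutes {1..n}" and a: "a \<in> H" and b: "b \<in> K"
  shows "H \<inter> cj (a \<circ> p \<circ> b) ` K = cj a ` (H \<inter> cj p ` K)"
proof -
  have ba: "bij a" using pgrp_bij[OF H a] .
  have bb: "bij b" using pgrp_bij[OF K b] .
  have bp: "bij p" using p permutes_bij by blast
  have pt: "cj (a \<circ> p \<circ> b) k = cj a (cj p (cj b k))" for k
    using ba bb bp by (simp add: cj_cj bij_comp comp_assoc)
  have "cj (a \<circ> p \<circ> b) ` K = cj a ` cj p ` cj b ` K"
    by (simp add: image_image pt)
  also have "cj b ` K = K" using pgrp_cj_self[OF K b] .
  finally have e1: "cj (a \<circ> p \<circ> b) ` K = cj a ` cj p ` K" .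
  have "cj a ` (H \<inter> cj p ` K) = cj a ` H \<inter> cj a ` cj p ` K" by (rule image_Int[OF inj_cj[OF ba]])
  then show ?thesis using pgrp_cj_self[OF H a] e1 by simp
qed

definition Bset :: "nat \<Rightarrow> nat list \<Rightarrow> nat list \<Rightarrow> nat list \<Rightarrow> (nat \<Rightarrow> nat) set set" where
  "Bset n mu alpha beta = {D. \<exists>p. p permutes {1..n} \<and>
               D = double_coset (cyc_group (std_perm alpha)) p (cyc_group (std_perm beta)) \<and>
               conjugate_in_Sn n (cyc_group (std_perm alpha) \<inter> conj_set p (cyc_group (std_perm beta)))
                                 (cyc_group (std_perm mu))}"

lemma bcoef_Bset: "bcoef n mu alpha beta = card (Bset n mu alpha beta)"
  by (simp add: bcoef_def Bset_def)

definition DC :: "nat \<Rightarrow> nat list \<Rightarrow> nat list \<Rightarrow> (nat \<Rightarrow> nat) set set" where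
  "DC n alpha beta = {double_coset (cyc_group (std_perm alpha)) p (cyc_group (std_perm beta)) | p. p permutes {1..n}}"

abbreviation Mg :: "nat list \<Rightarrow> (nat \<Rightarrow> nat) set" where
  "Mg mu \<equiv> cyc_group (std_perm mu)"

lemma Mg_pgrp: "mu \<in> partitions n \<Longrightarrow> pgrp n (Mg mu)"
  by (rule cyc_pgrp[OF std_perm_permutes])

lemma conjugate_iff: "conjugate_in_Sn n A B \<longleftrightarrow> (\<exists>g. g permutes {1..n} \<and> A = cj g ` B)"
  by (simp add: conjugate_in_Sn_def conj_set_eq)

lemma Bset_exists:
  assumes al: "alpha \<in> partitions n" and be: "beta \<in> partitions n" and D: "D \<in> DC n alpha beta"
  shows "\<exists>mu\<in>partitions n. D \<in> Bset n mu alpha beta"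
proof -
  obtain p where p: "p permutes {1..n}" "D = double_coset (Mg alpha) p (Mg beta)"
    using D by (auto simp: DC_def)
  let ?L = "Mg alpha \<inter> cj p ` Mg beta"
  have L: "pgrp n ?L" by (intro pgrp_Int pgrp_cj Mg_pgrp al be p(1))
  obtain d where d: "?L = cyc_group (std_perm alpha ^^ d)"
    using sub_cyc[OF L _ std_perm_permutes[OF al]] by blast
  obtain mu g where mu: "mu \<in> partitions n" "g permutes {1..n}" "std_perm alpha ^^ d = cj g (std_perm mu)"
    using conj_std[OF permutes_funpow[OF std_perm_permutes[OF al]], of d] by blast
  have "?L = cj g ` Mg mu" using d mu(3) cyc_cj[OF permutes_bij[OF mu(2)]] by simp
  then have "D \<in> Bset n mu alpha beta" using p mu(2) by (auto simp: Bset_def conj_set_eq conjugate_iff)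
  then show ?thesis using mu(1) by blast
qed

lemma Bset_unique:
  assumes al: "alpha \<in> partitions n" and be: "beta \<in> partitions n"
    and mu: "mu \<in> partitions n" and nu: "nu \<in> partitions n"
    and D1: "D \<in> Bset n mu alpha beta" and D2: "D \<in> Bset n nu alpha beta"
  shows "mu = nu"
proof -
  have H: "pgrp n (Mg alpha)" and K: "pgrp n (Mg beta)" using Mg_pgrp al be by auto
  obtain p g where p: "p permutes {1..n}" "D = double_coset (Mg alpha) p (Mg beta)"
      "g permutes {1..n}" "Mg alpha \<inter> cj p ` Mg beta = cj g ` Mg mu"
    using D1 by (auto simp: Bset_def conj_set_eq conjugate_iff)
  obtain p' g' where p': "p' permutes {1..n}" "D = double_coset (Mg alpha) p' (Mg beta)"
      "g' permutes {1..n}" "Mg alpha \<inter> cj p' ` Mg beta = cj g' ` Mg nu"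
    using D2 by (auto simp: Bset_def conj_set_eq conjugate_iff)
  have "p' \<in> double_coset (Mg alpha) p (Mg beta)" using dc_self[OF H K, of p'] p(2) p'(2) by simp
  then obtain a b where ab: "a \<in> Mg alpha" "b \<in> Mg beta" "p' = a \<circ> p \<circ> b"
    by (auto simp: double_coset_def)
  have "cj g' ` Mg nu = cj a ` cj g ` Mg mu"
    using dc_indep[OF H K p(1) ab(1,2)] p(4) p'(4) ab(3) by simp
  then have "osz n (cj g' ` Mg nu) = osz n (cj a ` (cj g ` Mg mu))" by simp
  then have "osz n (Mg nu) = osz n (Mg mu)"
    using osz_cj[OF p'(3)] osz_cj[OF pgrp_perm[OF H ab(1)]] osz_cj[OF p(3)] by simp
  then show ?thesis using partition_unique[OF mu nu] by metis
qed

lemma finite_DC: "finite (DC n alpha beta)"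
proof -
  have "DC n alpha beta \<subseteq> (\<lambda>p. double_coset (Mg alpha) p (Mg beta)) ` {p. p permutes {1..n}}"
    by (auto simp: DC_def)
  moreover have "finite ((\<lambda>p. double_coset (Mg alpha) p (Mg beta)) ` {p. p permutes {1..n}})"
    using finite_permutations[of "{1..n}"] by simp
  ultimately show ?thesis by (rule finite_subset)
qed

lemma Bset_sub_DC: "Bset n mu alpha beta \<subseteq> DC n alpha beta"
  by (auto simp: Bset_def DC_def)

lemma finite_Bset: "finite (Bset n mu alpha beta)"
  using finite_subset[OF Bset_sub_DC finite_DC] .




definition cos :: "(nat \<Rightarrow> 'a) \<Rightarrow> (nat \<Rightarrow> nat) set \<Rightarrow> (nat \<Rightarrow> 'a) set" where
  "cos l H = (\<lambda>h. l \<circ> h) ` H"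

lemma C_sp_eq: "C_sp n mu U = {cos l (Mg mu) | l. l \<in> bijs n U}"
  by (simp add: C_sp_def quot_species_def cos_def)

lemma cos_self: "pgrp n H \<Longrightarrow> l \<in> cos l H"
  unfolding cos_def by (rule image_eqI[of _ _ id]) (auto intro: pgrp_id)

lemma cos_memE:
  assumes "x \<in> cos l H"
  obtains h where "h \<in> H" "x = l \<circ> h"
  using assms by (auto simp: cos_def)

lemma cos_memI: "h \<in> H \<Longrightarrow> x = l \<circ> h \<Longrightarrow> x \<in> cos l H"
  by (auto simp: cos_def)

lemma cos_diff:
  assumes H: "pgrp n H" and l1: "l1 \<in> cos l H" and l2: "l2 \<in> cos l H"
  shows "\<exists>h\<in>H. l2 = l1 \<circ> h"
proof -
  obtain h1 where h1: "h1 \<in> H" "l1 = l \<circ> h1" using l1 by (rule cos_memE)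
  obtain h2 where h2: "h2 \<in> H" "l2 = l \<circ> h2" using l2 by (rule cos_memE)
  have "l1 \<circ> (inv h1 \<circ> h2) = l \<circ> (h1 \<circ> inv h1) \<circ> h2" using h1 by (simp add: comp_assoc)
  also have "\<dots> = l2" using bij_o_inv[OF pgrp_bij[OF H h1(1)]] h2 by simp
  finally show ?thesis using pgrp_comp[OF H pgrp_inv[OF H h1(1)] h2(1)] by metis
qed

lemma cos_eq:
  assumes H: "pgrp n H" and l2: "l2 \<in> cos l H"
  shows "cos l2 H = cos l H"
proof
  obtain h where h: "h \<in> H" "l2 = l \<circ> h" using l2 by (rule cos_memE)
  show "cos l2 H \<subseteq> cos l H"
  proof
    fix x assume "x \<in> cos l2 H"
    then obtain h' where "h' \<in> H" "x = l2 \<circ> h'" by (rule cos_memE)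
    then show "x \<in> cos l H" using h pgrp_comp[OF H] by (intro cos_memI[of "h \<circ> h'"]) (auto simp: comp_assoc)
  qed
  show "cos l H \<subseteq> cos l2 H"
  proof
    fix x assume "x \<in> cos l H"
    then have "x \<in> cos l H" .
    obtain h' where h': "h' \<in> H" "x = l \<circ> h'" using \<open>x \<in> cos l H\<close> by (rule cos_memE)
    have "l2 \<circ> (inv h \<circ> h') = l \<circ> (h \<circ> inv h) \<circ> h'" using h by (simp add: comp_assoc)
    also have "\<dots> = x" using bij_o_inv[OF pgrp_bij[OF H h(1)]] h' by simp
    finally show "x \<in> cos l2 H" using pgrp_comp[OF H pgrp_inv[OF H h(1)] h'(1)]
      by (intro cos_memI[of "inv h \<circ> h'"]) auto
  qed
qed

lemma bijs_comp:
  assumes l: "l \<in> bijs n U" and h: "h permutes {1..n}"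
  shows "l \<circ> h \<in> bijs n U"
proof -
  have "bij_betw h {1..n} {1..n}" using h by (rule permutes_imp_bij)
  then have "bij_betw (l \<circ> h) {1..n} U" using l by (auto simp: bijs_def intro: bij_betw_trans)
  moreover have "l \<circ> h \<in> extensional {1..n}"
    using l permutes_not_in[OF h] by (auto simp: bijs_def extensional_def)
  ultimately show ?thesis by (simp add: bijs_def)
qed

lemma cos_bijs:
  assumes H: "pgrp n H" and l: "l \<in> bijs n U" and x: "x \<in> cos l H"
  shows "x \<in> bijs n U"
  using x by (rule cos_memE) (use bijs_comp[OF l pgrp_perm[OF H]] in auto)

lemma bijs_cancel:
  assumes l: "l \<in> bijs n U" and x: "x permutes {1..n}" and y: "y permutes {1..n}"
    and e: "l \<circ> x = l \<circ> y"
  shows "x = y"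
proof
  fix z show "x z = y z"
  proof (cases "z \<in> {1..n}")
    case True
    then have "x z \<in> {1..n}" "y z \<in> {1..n}" using permutes_in_image[OF x, of z] permutes_in_image[OF y, of z] by blast+
    moreover have "l (x z) = l (y z)" using e by (metis comp_apply)
    moreover have "inj_on l {1..n}" using l by (auto simp: bijs_def bij_betw_def)
    ultimately show ?thesis by (auto dest: inj_onD)
  next
    case False then show ?thesis using permutes_not_in x y by metis
  qed
qed

lemma bijs_diff:
  assumes l: "l \<in> bijs n U" and l': "l' \<in> bijs n U"
  shows "\<exists>p. p permutes {1..n} \<and> l' = l \<circ> p"
proof -
  have bl: "bij_betw l {1..n} U" and bl': "bij_betw l' {1..n} U" using l l' by (auto simp: bijs_def)
  define q where "q = inv_into {1..n} l \<circ> l'"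
  have bq: "bij_betw q {1..n} {1..n}" unfolding q_def by (rule bij_betw_trans[OF bl' bij_betw_inv_into[OF bl]])
  define p where "p = restrict_id q {1..n}"
  have pp: "p permutes {1..n}" unfolding p_def by (rule permutes_restrict_id[OF bq])
  have "l' = l \<circ> p"
  proof
    fix z show "l' z = (l \<circ> p) z"
    proof (cases "z \<in> {1..n}")
      case True
      then have "l' z \<in> U" using bl' bij_betwE by blast
      then have "l (inv_into {1..n} l (l' z)) = l' z" using bl by (simp add: bij_betw_inv_into_right)
      then show ?thesis using True by (simp add: p_def q_def)
    next
      case False then show ?thesis using l l' by (simp add: p_def bijs_def extensional_def)
    qed
  qed
  then show ?thesis using pp by blast
qed

definition tr :: "nat \<Rightarrow> ('a \<Rightarrow> 'a) \<Rightarrow> (nat \<Rightarrow> 'a) \<Rightarrow> (nat \<Rightarrow> 'a)" where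
  "tr n s l = restrict (s \<circ> l) {1..n}"

lemma quot_transport_eq: "quot_transport n s c = tr n s ` c"
  by (simp add: quot_transport_def tr_def)

lemma tr_comp: "p permutes {1..n} \<Longrightarrow> tr n s (l \<circ> p) = tr n s l \<circ> p"
proof
  fix x assume p: "p permutes {1..n}"
  show "tr n s (l \<circ> p) x = (tr n s l \<circ> p) x"
  proof (cases "x \<in> {1..n}")
    case True then have "p x \<in> {1..n}" using permutes_in_image[OF p, of x] by simp
    then show ?thesis using True by (simp add: tr_def)
  next
    case False
    have "p x = x" using permutes_not_in[OF p False] .
    then show ?thesis using False by (auto simp: tr_def)
  qed
qed

lemma tr_inj:
  assumes s: "inj_on s U" and l: "l \<in> bijs n U" and l': "l' \<in> bijs n U" and e: "tr n s l = tr n s l'"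
  shows "l = l'"
proof (rule extensionalityI[of _ "{1..n}"])
  show "l \<in> extensional {1..n}" "l' \<in> extensional {1..n}" using l l' by (auto simp: bijs_def)
  fix x assume x: "x \<in> {1..n}"
  have "tr n s l x = s (l x)" "tr n s l' x = s (l' x)" using x by (simp_all add: tr_def)
  then have "s (l x) = s (l' x)" using e by simp
  moreover have "bij_betw l {1..n} U" "bij_betw l' {1..n} U" using l l' by (auto simp: bijs_def)
  then have "l x \<in> U" "l' x \<in> U" using x by (meson bij_betwE)+
  ultimately show "l x = l' x" using inj_onD[OF s] by blast
qed

lemma tr_bijs:
  assumes s: "bij_betw s U V" and l: "l \<in> bijs n U"
  shows "tr n s l \<in> bijs n V"
proof -
  have "bij_betw l {1..n} U" using l by (simp add: bijs_def)
  then have b: "bij_betw (s \<circ> l) {1..n} V" by (rule bij_betw_trans[OF _ s])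
  have "bij_betw (tr n s l) {1..n} V = bij_betw (s \<circ> l) {1..n} V"
    by (rule bij_betw_cong) (simp add: tr_def)
  moreover have "tr n s l \<in> extensional {1..n}" unfolding tr_def by (rule restrict_extensional)
  ultimately show ?thesis using b by (simp add: bijs_def)
qed

lemma tr_cos: "pgrp n H \<Longrightarrow> tr n s ` cos l H = cos (tr n s l) H"
  unfolding cos_def image_image by (rule image_cong) (auto intro: tr_comp pgrp_perm)

lemma tr_pairs:
  assumes s: "inj_on s U" and c: "c \<subseteq> bijs n U" and c': "c' \<subseteq> bijs n U" and p: "p permutes {1..n}"
  shows "{l \<in> tr n s ` c. l \<circ> p \<in> tr n s ` c'} = tr n s ` {l \<in> c. l \<circ> p \<in> c'}"
proof
  show "tr n s ` {l \<in> c. l \<circ> p \<in> c'} \<subseteq> {l \<in> tr n s ` c. l \<circ> p \<in> tr n s ` c'}"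
  proof
    fix x assume "x \<in> tr n s ` {l \<in> c. l \<circ> p \<in> c'}"
    then obtain l where l: "l \<in> c" "l \<circ> p \<in> c'" "x = tr n s l" by auto
    then have "x \<circ> p \<in> tr n s ` c'" using tr_comp[OF p, of s l] by (metis image_eqI)
    then show "x \<in> {l \<in> tr n s ` c. l \<circ> p \<in> tr n s ` c'}" using l by auto
  qed
  show "{l \<in> tr n s ` c. l \<circ> p \<in> tr n s ` c'} \<subseteq> tr n s ` {l \<in> c. l \<circ> p \<in> c'}"
  proof
    fix x assume "x \<in> {l \<in> tr n s ` c. l \<circ> p \<in> tr n s ` c'}"
    then obtain l y where l: "l \<in> c" "x = tr n s l" and y: "y \<in> c'" "x \<circ> p = tr n s y" by auto
    have "tr n s (l \<circ> p) = tr n s y" using tr_comp[OF p, of s l] l(2) y(2) by simp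
    moreover have "l \<circ> p \<in> bijs n U" using bijs_comp[OF _ p] l c by auto
    ultimately have "l \<circ> p = y" using tr_inj[OF s] y c' by auto
    then show "x \<in> tr n s ` {l \<in> c. l \<circ> p \<in> c'}" using l y by auto
  qed
qed

lemma tr_compg: "g permutes {1..n} \<Longrightarrow> (\<lambda>l. l \<circ> g) ` tr n s ` X = tr n s ` (\<lambda>l. l \<circ> g) ` X"
  by (simp add: image_image tr_comp)




definition rep :: "nat \<Rightarrow> nat list \<Rightarrow> nat list \<Rightarrow> (nat \<Rightarrow> nat) set \<Rightarrow> nat \<Rightarrow> nat" where
  "rep n alpha beta D = (SOME p. p permutes {1..n} \<and> D = double_coset (Mg alpha) p (Mg beta))"

lemma rep:
  assumes "D \<in> DC n alpha beta"
  shows "rep n alpha beta D permutes {1..n} \<and> D = double_coset (Mg alpha) (rep n alpha beta D) (Mg beta)"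
proof -
  have ex: "\<exists>p. p permutes {1..n} \<and> D = double_coset (Mg alpha) p (Mg beta)"
    using assms by (auto simp: DC_def)
  show ?thesis unfolding rep_def by (rule someI_ex[OF ex])
qed

definition muof :: "nat \<Rightarrow> nat list \<Rightarrow> nat list \<Rightarrow> (nat \<Rightarrow> nat) set \<Rightarrow> nat list" where
  "muof n alpha beta D = (THE mu. mu \<in> partitions n \<and> D \<in> Bset n mu alpha beta)"

lemma muof:
  assumes al: "alpha \<in> partitions n" and be: "beta \<in> partitions n" and D: "D \<in> DC n alpha beta"
  shows "muof n alpha beta D \<in> partitions n \<and> D \<in> Bset n (muof n alpha beta D) alpha beta"
proof -
  obtain mu where mu: "mu \<in> partitions n" "D \<in> Bset n mu alpha beta" using Bset_exists[OF al be D] by blast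
  have "\<exists>!mu. mu \<in> partitions n \<and> D \<in> Bset n mu alpha beta"
  proof (rule ex1I[of _ mu])
    show "mu \<in> partitions n \<and> D \<in> Bset n mu alpha beta" using mu by simp
    fix nu assume "nu \<in> partitions n \<and> D \<in> Bset n nu alpha beta"
    then show "nu = mu" using Bset_unique[OF al be _ mu(1) _ mu(2)] by blast
  qed
  then show ?thesis unfolding muof_def by (rule theI')
qed

lemma muof_eq:
  assumes al: "alpha \<in> partitions n" and be: "beta \<in> partitions n" and mu: "mu \<in> partitions n"
    and D: "D \<in> Bset n mu alpha beta"
  shows "muof n alpha beta D = mu"
proof -
  have DD: "D \<in> DC n alpha beta" using D Bset_sub_DC by blast
  show ?thesis using muof[OF al be DD] Bset_unique[OF al be _ mu _ D] by blast
qed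

definition Lg :: "nat list \<Rightarrow> nat list \<Rightarrow> (nat \<Rightarrow> nat) \<Rightarrow> (nat \<Rightarrow> nat) set" where
  "Lg alpha beta p = Mg alpha \<inter> cj p ` Mg beta"

definition gof :: "nat \<Rightarrow> nat list \<Rightarrow> nat list \<Rightarrow> (nat \<Rightarrow> nat) set \<Rightarrow> nat \<Rightarrow> nat" where
  "gof n alpha beta D = (SOME g. g permutes {1..n} \<and>
      Lg alpha beta (rep n alpha beta D) = cj g ` Mg (muof n alpha beta D))"

lemma gof:
  assumes al: "alpha \<in> partitions n" and be: "beta \<in> partitions n" and D: "D \<in> DC n alpha beta"
  shows "gof n alpha beta D permutes {1..n} \<and>
      Lg alpha beta (rep n alpha beta D) = cj (gof n alpha beta D) ` Mg (muof n alpha beta D)"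
proof -
  have H: "pgrp n (Mg alpha)" and K: "pgrp n (Mg beta)" using Mg_pgrp al be by auto
  let ?mu = "muof n alpha beta D"
  let ?r = "rep n alpha beta D"
  have "D \<in> Bset n ?mu alpha beta" using muof[OF al be D] by blast
  then obtain p g where p: "p permutes {1..n}" "D = double_coset (Mg alpha) p (Mg beta)"
      "g permutes {1..n}" "Lg alpha beta p = cj g ` Mg ?mu"
    by (auto simp: Bset_def conj_set_eq conjugate_iff Lg_def)
  have r: "?r permutes {1..n}" "D = double_coset (Mg alpha) ?r (Mg beta)" using rep[OF D] by auto
  have "?r \<in> double_coset (Mg alpha) p (Mg beta)" using dc_self[OF H K, of ?r] r(2) p(2) by simp
  then obtain a b where ab: "a \<in> Mg alpha" "b \<in> Mg beta" "?r = a \<circ> p \<circ> b" by (rule dc_memE)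
  have ap: "a permutes {1..n}" using pgrp_perm[OF H ab(1)] .
  have "Lg alpha beta ?r = cj a ` Lg alpha beta p"
    unfolding Lg_def ab(3) by (rule dc_indep[OF H K p(1) ab(1,2)])
  also have "\<dots> = cj a ` cj g ` Mg ?mu" using p(4) by simp
  also have "\<dots> = cj (a \<circ> g) ` Mg ?mu"
    unfolding image_image using cj_cj[OF permutes_bij[OF ap] permutes_bij[OF p(3)]] by simp
  finally have "a \<circ> g permutes {1..n} \<and> Lg alpha beta ?r = cj (a \<circ> g) ` Mg ?mu"
    using permutes_compose[OF p(3) ap] by simp
  then have ex: "\<exists>g. g permutes {1..n} \<and> Lg alpha beta ?r = cj g ` Mg ?mu" by blast
  show ?thesis unfolding gof_def by (rule someI_ex[OF ex])
qed

definition good :: "nat \<Rightarrow> nat list \<Rightarrow> nat list \<Rightarrow> (nat \<Rightarrow> 'a) set \<Rightarrow> (nat \<Rightarrow> 'a) set \<Rightarrow> (nat \<Rightarrow> nat) set \<Rightarrow> bool" where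
  "good n alpha beta c c' D \<longleftrightarrow> (\<exists>l\<in>c. l \<circ> rep n alpha beta D \<in> c')"

definition dcof :: "nat \<Rightarrow> nat list \<Rightarrow> nat list \<Rightarrow> (nat \<Rightarrow> 'a) set \<Rightarrow> (nat \<Rightarrow> 'a) set \<Rightarrow> (nat \<Rightarrow> nat) set" where
  "dcof n alpha beta c c' = (SOME D. D \<in> DC n alpha beta \<and> good n alpha beta c c' D)"

lemma good_unique:
  assumes al: "alpha \<in> partitions n" and be: "beta \<in> partitions n"
    and l: "l \<in> bijs n U" and l': "l' \<in> bijs n U"
    and D1: "D1 \<in> DC n alpha beta" and D2: "D2 \<in> DC n alpha beta"
    and g1: "good n alpha beta (cos l (Mg alpha)) (cos l' (Mg beta)) D1"
    and g2: "good n alpha beta (cos l (Mg alpha)) (cos l' (Mg beta)) D2"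
  shows "D1 = D2"
proof -
  have H: "pgrp n (Mg alpha)" and K: "pgrp n (Mg beta)" using Mg_pgrp al be by auto
  let ?p1 = "rep n alpha beta D1" and ?p2 = "rep n alpha beta D2"
  have r1: "?p1 permutes {1..n}" "D1 = double_coset (Mg alpha) ?p1 (Mg beta)" using rep[OF D1] by auto
  have r2: "?p2 permutes {1..n}" "D2 = double_coset (Mg alpha) ?p2 (Mg beta)" using rep[OF D2] by auto
  obtain l1 where l1: "l1 \<in> cos l (Mg alpha)" "l1 \<circ> ?p1 \<in> cos l' (Mg beta)" using g1 by (auto simp: good_def)
  obtain l2 where l2: "l2 \<in> cos l (Mg alpha)" "l2 \<circ> ?p2 \<in> cos l' (Mg beta)" using g2 by (auto simp: good_def)
  obtain h where h: "h \<in> Mg alpha" "l2 = l1 \<circ> h" using cos_diff[OF H l1(1) l2(1)] by blast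
  obtain k where k: "k \<in> Mg beta" "l2 \<circ> ?p2 = l1 \<circ> ?p1 \<circ> k" using cos_diff[OF K l1(2) l2(2)] by blast
  have l1b: "l1 \<in> bijs n U" using cos_bijs[OF H l l1(1)] .
  have hp: "h permutes {1..n}" and kp: "k permutes {1..n}" using pgrp_perm[OF H h(1)] pgrp_perm[OF K k(1)] by auto
  have "l1 \<circ> (h \<circ> ?p2) = l1 \<circ> (?p1 \<circ> k)" using h(2) k(2) by (simp add: comp_assoc)
  then have e: "h \<circ> ?p2 = ?p1 \<circ> k"
    by (rule bijs_cancel[OF l1b permutes_compose[OF r2(1) hp] permutes_compose[OF kp r1(1)]])
  have "?p2 = inv h \<circ> (h \<circ> ?p2)" using bij_inv_o[OF pgrp_bij[OF H h(1)]] by (simp add: o_assoc)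
  also have "\<dots> = inv h \<circ> ?p1 \<circ> k" using e by (simp add: comp_assoc)
  finally have "?p2 \<in> double_coset (Mg alpha) ?p1 (Mg beta)"
    by (rule dc_memI[OF pgrp_inv[OF H h(1)] k(1)])
  then have "double_coset (Mg alpha) ?p2 (Mg beta) = double_coset (Mg alpha) ?p1 (Mg beta)"
    by (rule dc_eq[OF H K])
  then show ?thesis using r1(2) r2(2) by simp
qed

lemma good_exists:
  assumes al: "alpha \<in> partitions n" and be: "beta \<in> partitions n"
    and l: "l \<in> bijs n U" and l': "l' \<in> bijs n U"
  shows "\<exists>D\<in>DC n alpha beta. good n alpha beta (cos l (Mg alpha)) (cos l' (Mg beta)) D"
proof -
  have H: "pgrp n (Mg alpha)" and K: "pgrp n (Mg beta)" using Mg_pgrp al be by auto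
  obtain q where q: "q permutes {1..n}" "l' = l \<circ> q" using bijs_diff[OF l l'] by blast
  define D where "D = double_coset (Mg alpha) q (Mg beta)"
  have D: "D \<in> DC n alpha beta" using q(1) by (auto simp: DC_def D_def)
  let ?r = "rep n alpha beta D"
  have "?r \<in> double_coset (Mg alpha) ?r (Mg beta)" by (rule dc_self[OF H K])
  then have "?r \<in> D" using rep[OF D] by simp
  then obtain a b where ab: "a \<in> Mg alpha" "b \<in> Mg beta" "?r = a \<circ> q \<circ> b" unfolding D_def by (rule dc_memE)
  have "l \<circ> inv a \<in> cos l (Mg alpha)" by (rule cos_memI[OF pgrp_inv[OF H ab(1)]]) simp
  moreover have "(l \<circ> inv a) \<circ> ?r = l' \<circ> b"
  proof -
    have "(l \<circ> inv a) \<circ> ?r = l \<circ> (inv a \<circ> a) \<circ> q \<circ> b" using ab(3) by (simp add: comp_assoc)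
    then show ?thesis using bij_inv_o[OF pgrp_bij[OF H ab(1)]] q(2) by (simp add: comp_assoc)
  qed
  then have "(l \<circ> inv a) \<circ> ?r \<in> cos l' (Mg beta)" by (intro cos_memI[OF ab(2)])
  ultimately show ?thesis using D by (auto simp: good_def)
qed

lemma dcof:
  assumes al: "alpha \<in> partitions n" and be: "beta \<in> partitions n"
    and l: "l \<in> bijs n U" and l': "l' \<in> bijs n U"
  shows "dcof n alpha beta (cos l (Mg alpha)) (cos l' (Mg beta)) \<in> DC n alpha beta \<and>
    good n alpha beta (cos l (Mg alpha)) (cos l' (Mg beta)) (dcof n alpha beta (cos l (Mg alpha)) (cos l' (Mg beta)))"
  using good_exists[OF al be l l'] unfolding dcof_def by (metis (no_types, lifting) someI_ex)

lemma dcof_eq: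
  assumes al: "alpha \<in> partitions n" and be: "beta \<in> partitions n"
    and l: "l \<in> bijs n U" and l': "l' \<in> bijs n U"
    and D: "D \<in> DC n alpha beta" and g: "good n alpha beta (cos l (Mg alpha)) (cos l' (Mg beta)) D"
  shows "dcof n alpha beta (cos l (Mg alpha)) (cos l' (Mg beta)) = D"
  using dcof[OF al be l l'] good_unique[OF al be l l' _ D _ g] by blast

lemma pairs_cos:
  assumes al: "alpha \<in> partitions n" and be: "beta \<in> partitions n"
    and l: "l \<in> bijs n U" and l': "l' \<in> bijs n U" and p: "p permutes {1..n}"
    and l1: "l1 \<in> cos l (Mg alpha)" and l1p: "l1 \<circ> p \<in> cos l' (Mg beta)"
  shows "{x \<in> cos l (Mg alpha). x \<circ> p \<in> cos l' (Mg beta)} = cos l1 (Lg alpha beta p)"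
proof
  have H: "pgrp n (Mg alpha)" and K: "pgrp n (Mg beta)" using Mg_pgrp al be by auto
  have bp: "bij p" using p permutes_bij by blast
  have l1b: "l1 \<in> bijs n U" using cos_bijs[OF H l l1] .
  have c1: "cos l1 (Mg alpha) = cos l (Mg alpha)" using cos_eq[OF H l1] .
  have c2: "cos (l1 \<circ> p) (Mg beta) = cos l' (Mg beta)" using cos_eq[OF K l1p] .
  show "cos l1 (Lg alpha beta p) \<subseteq> {x \<in> cos l (Mg alpha). x \<circ> p \<in> cos l' (Mg beta)}"
  proof
    fix x assume "x \<in> cos l1 (Lg alpha beta p)"
    then obtain t where t: "t \<in> Lg alpha beta p" "x = l1 \<circ> t" by (rule cos_memE)
    then have tH: "t \<in> Mg alpha" by (simp add: Lg_def)
    obtain k where k: "k \<in> Mg beta" "t = cj p k" using t(1) by (auto simp: Lg_def)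
    have "t \<circ> p = p \<circ> k" using k(2) bij_inv_o[OF bp] by (simp add: cj_def comp_assoc)
    then have "x \<circ> p = (l1 \<circ> p) \<circ> k" using t(2) by (simp add: comp_assoc)
    then have "x \<circ> p \<in> cos (l1 \<circ> p) (Mg beta)" by (rule cos_memI[OF k(1)])
    moreover have "x \<in> cos l1 (Mg alpha)" using t(2) by (rule cos_memI[OF tH])
    ultimately show "x \<in> {x \<in> cos l (Mg alpha). x \<circ> p \<in> cos l' (Mg beta)}" using c1 c2 by simp
  qed
  show "{x \<in> cos l (Mg alpha). x \<circ> p \<in> cos l' (Mg beta)} \<subseteq> cos l1 (Lg alpha beta p)"
  proof
    fix x assume "x \<in> {x \<in> cos l (Mg alpha). x \<circ> p \<in> cos l' (Mg beta)}"
    then have x: "x \<in> cos l (Mg alpha)" "x \<circ> p \<in> cos l' (Mg beta)" by auto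
    obtain h where h: "h \<in> Mg alpha" "x = l1 \<circ> h" using cos_diff[OF H l1 x(1)] by blast
    obtain k where k: "k \<in> Mg beta" "x \<circ> p = l1 \<circ> p \<circ> k" using cos_diff[OF K l1p x(2)] by blast
    have hp: "h permutes {1..n}" and kp: "k permutes {1..n}" using pgrp_perm[OF H h(1)] pgrp_perm[OF K k(1)] by auto
    have "l1 \<circ> (h \<circ> p) = l1 \<circ> (p \<circ> k)" using h(2) k(2) by (simp add: comp_assoc)
    then have e: "h \<circ> p = p \<circ> k"
      by (rule bijs_cancel[OF l1b permutes_compose[OF p hp] permutes_compose[OF kp p]])
    have "h = h \<circ> p \<circ> inv p" using bij_o_inv[OF bp] by (simp add: comp_assoc)
    also have "\<dots> = cj p k" using e by (simp add: cj_def)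
    finally have "h \<in> Lg alpha beta p" using h(1) k(1) by (auto simp: Lg_def)
    then show "x \<in> cos l1 (Lg alpha beta p)" using h(2) by (rule cos_memI)
  qed
qed

lemma comp_cos:
  assumes g: "g permutes {1..n}"
  shows "(\<lambda>x. x \<circ> g) ` cos l1 (cj g ` M) = cos (l1 \<circ> g) M"
proof -
  have "(\<lambda>x. x \<circ> g) ` cos l1 (cj g ` M) = (\<lambda>m. l1 \<circ> cj g m \<circ> g) ` M"
    by (simp add: cos_def image_image)
  also have "\<dots> = (\<lambda>m. l1 \<circ> g \<circ> m) ` M"
    using bij_inv_o[OF permutes_bij[OF g]] by (simp add: cj_def comp_assoc)
  finally show ?thesis by (simp add: cos_def comp_assoc)
qed

definition Out :: "nat \<Rightarrow> nat list \<Rightarrow> nat list \<Rightarrow> (nat \<Rightarrow> nat) set \<Rightarrow> (nat \<Rightarrow> 'a) set \<Rightarrow> (nat \<Rightarrow> 'a) set \<Rightarrow> (nat \<Rightarrow> 'a) set" where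
  "Out n alpha beta D c c' = (\<lambda>l. l \<circ> gof n alpha beta D) ` {l \<in> c. l \<circ> rep n alpha beta D \<in> c'}"

lemma Out_struct:
  assumes al: "alpha \<in> partitions n" and be: "beta \<in> partitions n"
    and l: "l \<in> bijs n U" and l': "l' \<in> bijs n U"
    and D: "D \<in> DC n alpha beta" and l1: "l1 \<in> cos l (Mg alpha)"
    and l1p: "l1 \<circ> rep n alpha beta D \<in> cos l' (Mg beta)"
  shows "Out n alpha beta D (cos l (Mg alpha)) (cos l' (Mg beta))
     = cos (l1 \<circ> gof n alpha beta D) (Mg (muof n alpha beta D))"
proof -
  have r: "rep n alpha beta D permutes {1..n}" using rep[OF D] by blast
  have g: "gof n alpha beta D permutes {1..n}"
     "Lg alpha beta (rep n alpha beta D) = cj (gof n alpha beta D) ` Mg (muof n alpha beta D)"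
    using gof[OF al be D] by auto
  show ?thesis unfolding Out_def pairs_cos[OF al be l l' r l1 l1p] g(2) comp_cos[OF g(1)] ..
qed




lemma len_le_sum: "(\<forall>m\<in>set xs. 0 < (m::nat)) \<Longrightarrow> length xs \<le> sum_list xs"
  by (induction xs) auto

lemma finite_partitions: "finite (partitions n)"
proof (rule finite_subset[OF _ finite_lists_length_le[of "{0..n}" n]])
  show "partitions n \<subseteq> {xs. set xs \<subseteq> {0..n} \<and> length xs \<le> n}"
  proof
    fix xs assume xs: "xs \<in> partitions n"
    then have p: "\<forall>m\<in>set xs. 0 < m" "sum_list xs = n" by (auto simp: partitions_def)
    have "set xs \<subseteq> {0..n}" using member_le_sum_list[of _ xs] p(2) by auto
    moreover have "length xs \<le> n" using len_le_sum[OF p(1)] p(2) by simp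
    ultimately show "xs \<in> {xs. set xs \<subseteq> {0..n} \<and> length xs \<le> n}" by simp
  qed
qed simp

definition Tset :: "nat \<Rightarrow> (nat list \<Rightarrow> nat) \<Rightarrow> (nat list \<Rightarrow> nat) \<Rightarrow> nat list
    \<Rightarrow> (nat list \<times> nat \<times> nat list \<times> nat \<times> (nat \<Rightarrow> nat) set) set" where
  "Tset n a b mu = (SIGMA alpha:partitions n. SIGMA i:{..<a alpha}. SIGMA beta:partitions n.
      SIGMA j:{..<b beta}. Bset n mu alpha beta)"

definition cnt :: "nat \<Rightarrow> (nat list \<Rightarrow> nat) \<Rightarrow> (nat list \<Rightarrow> nat) \<Rightarrow> nat list \<Rightarrow> nat" where
  "cnt n a b = (\<lambda>mu. \<Sum>alpha\<in>partitions n. \<Sum>beta\<in>partitions n. a alpha * b beta * bcoef n mu alpha beta)"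

lemma card_Tset: "card (Tset n a b mu) = cnt n a b mu"
proof -
  have "card (Tset n a b mu) = (\<Sum>alpha\<in>partitions n. a alpha * (\<Sum>beta\<in>partitions n. b beta * card (Bset n mu alpha beta)))"
    unfolding Tset_def by (simp add: card_SigmaI finite_partitions finite_Bset finite_SigmaI)
  also have "\<dots> = cnt n a b mu"
    by (simp add: cnt_def sum_distrib_left bcoef_Bset mult.assoc)
  finally show ?thesis .
qed

lemma finite_Tset: "finite (Tset n a b mu)"
  unfolding Tset_def by (simp add: finite_partitions finite_Bset finite_SigmaI)

definition idx :: "nat \<Rightarrow> (nat list \<Rightarrow> nat) \<Rightarrow> (nat list \<Rightarrow> nat) \<Rightarrow> nat list
    \<Rightarrow> (nat list \<times> nat \<times> nat list \<times> nat \<times> (nat \<Rightarrow> nat) set) \<Rightarrow> nat" where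
  "idx n a b mu = (SOME h. bij_betw h (Tset n a b mu) {..<cnt n a b mu})"

lemma idx_bij: "bij_betw (idx n a b mu) (Tset n a b mu) {..<cnt n a b mu}"
proof -
  have "\<exists>h. bij_betw h (Tset n a b mu) {0..<card (Tset n a b mu)}"
    by (rule ex_bij_betw_finite_nat[OF finite_Tset])
  then have ex: "\<exists>h. bij_betw h (Tset n a b mu) {..<cnt n a b mu}"
    by (simp add: card_Tset atLeast0LessThan)
  show ?thesis unfolding idx_def by (rule someI_ex[OF ex])
qed

definition phiF :: "nat \<Rightarrow> (nat list \<Rightarrow> nat) \<Rightarrow> (nat list \<Rightarrow> nat) \<Rightarrow>
    (nat list \<times> nat \<times> (nat \<Rightarrow> 'a) set) \<times> (nat list \<times> nat \<times> (nat \<Rightarrow> 'a) set)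
    \<Rightarrow> nat list \<times> nat \<times> (nat \<Rightarrow> 'a) set" where
  "phiF n a b x = (case x of ((alpha, i, c), (beta, j, c')) \<Rightarrow>
     (muof n alpha beta (dcof n alpha beta c c'),
      idx n a b (muof n alpha beta (dcof n alpha beta c c')) (alpha, i, beta, j, dcof n alpha beta c c'),
      Out n alpha beta (dcof n alpha beta c c') c c'))"

lemma CEsp_mem: "x \<in> CEsp n a U \<longleftrightarrow>
   (\<exists>alpha i l. x = (alpha, i, cos l (Mg alpha)) \<and> alpha \<in> partitions n \<and> i < a alpha \<and> l \<in> bijs n U)"
  by (auto simp: CEsp_def C_sp_eq)

lemma phi_val:
  assumes al: "alpha \<in> partitions n" and be: "beta \<in> partitions n"
    and l: "l \<in> bijs n U" and l': "l' \<in> bijs n U"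
  defines "D \<equiv> dcof n alpha beta (cos l (Mg alpha)) (cos l' (Mg beta))"
  shows "D \<in> DC n alpha beta \<and> (\<exists>l1. l1 \<in> bijs n U \<and> l1 \<in> cos l (Mg alpha) \<and> l1 \<circ> rep n alpha beta D \<in> cos l' (Mg beta) \<and>
     phiF n a b ((alpha, i, cos l (Mg alpha)), (beta, j, cos l' (Mg beta)))
     = (muof n alpha beta D, idx n a b (muof n alpha beta D) (alpha, i, beta, j, D),
        cos (l1 \<circ> gof n alpha beta D) (Mg (muof n alpha beta D))))"
proof -
  have H: "pgrp n (Mg alpha)" using Mg_pgrp al by auto
  have D: "D \<in> DC n alpha beta" "good n alpha beta (cos l (Mg alpha)) (cos l' (Mg beta)) D"
    using dcof[OF al be l l'] by (auto simp: D_def)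
  obtain l1 where l1: "l1 \<in> cos l (Mg alpha)" "l1 \<circ> rep n alpha beta D \<in> cos l' (Mg beta)"
    using D(2) by (auto simp: good_def)
  have l1b: "l1 \<in> bijs n U" using cos_bijs[OF H l l1(1)] .
  have "phiF n a b ((alpha, i, cos l (Mg alpha)), (beta, j, cos l' (Mg beta)))
     = (muof n alpha beta D, idx n a b (muof n alpha beta D) (alpha, i, beta, j, D),
        Out n alpha beta D (cos l (Mg alpha)) (cos l' (Mg beta)))"
    by (simp add: phiF_def D_def)
  also have "Out n alpha beta D (cos l (Mg alpha)) (cos l' (Mg beta))
      = cos (l1 \<circ> gof n alpha beta D) (Mg (muof n alpha beta D))"
    by (rule Out_struct[OF al be l l' D(1) l1])
  finally show ?thesis using D(1) l1 l1b by blast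
qed




lemma CEsp_memE:
  assumes "x \<in> CEsp n a U"
  obtains alpha i l where "x = (alpha, i, cos l (Mg alpha))" "alpha \<in> partitions n" "i < a alpha" "l \<in> bijs n U"
proof -
  have "\<exists>alpha i l. x = (alpha, i, cos l (Mg alpha)) \<and> alpha \<in> partitions n \<and> i < a alpha \<and> l \<in> bijs n U"
    using assms unfolding CEsp_mem .
  then show ?thesis using that by (elim exE conjE) simp
qed

lemma CEsp_memI:
  "alpha \<in> partitions n \<Longrightarrow> i < a alpha \<Longrightarrow> l \<in> bijs n U \<Longrightarrow> (alpha, i, cos l (Mg alpha)) \<in> CEsp n a U"
  unfolding CEsp_mem by (rule exI[of _ alpha], rule exI[of _ i], rule exI[of _ l]) simp

lemma prod_memE:
  assumes "x \<in> CEsp n a U \<times> CEsp n b U"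
  obtains alpha i l beta j l' where "x = ((alpha, i, cos l (Mg alpha)), (beta, j, cos l' (Mg beta)))"
    "alpha \<in> partitions n" "i < a alpha" "l \<in> bijs n U"
    "beta \<in> partitions n" "j < b beta" "l' \<in> bijs n U"
proof -
  obtain x1 x2 where x: "x = (x1, x2)" "x1 \<in> CEsp n a U" "x2 \<in> CEsp n b U" using assms by (cases x) auto
  obtain alpha i l where 1: "x1 = (alpha, i, cos l (Mg alpha))" "alpha \<in> partitions n" "i < a alpha" "l \<in> bijs n U"
    using x(2) by (rule CEsp_memE)
  obtain beta j l' where 2: "x2 = (beta, j, cos l' (Mg beta))" "beta \<in> partitions n" "j < b beta" "l' \<in> bijs n U"
    using x(3) by (rule CEsp_memE)
  show ?thesis using that[of alpha i l beta j l'] x(1) 1 2 by simp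
qed

lemma phi_into:
  assumes x: "x \<in> CEsp n a U \<times> CEsp n b U"
  shows "phiF n a b x \<in> CEsp n (cnt n a b) U"
proof -
  obtain alpha i l beta j l' where
    x1: "x = ((alpha, i, cos l (Mg alpha)), (beta, j, cos l' (Mg beta)))"
    and al: "alpha \<in> partitions n" "i < a alpha" "l \<in> bijs n U"
    and be: "beta \<in> partitions n" "j < b beta" "l' \<in> bijs n U"
    using x by (rule prod_memE)
  define D where "D = dcof n alpha beta (cos l (Mg alpha)) (cos l' (Mg beta))"
  obtain l1 where D: "D \<in> DC n alpha beta" and l1: "l1 \<in> bijs n U"
    and ph: "phiF n a b x = (muof n alpha beta D, idx n a b (muof n alpha beta D) (alpha, i, beta, j, D),
        cos (l1 \<circ> gof n alpha beta D) (Mg (muof n alpha beta D)))"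
    using phi_val[OF al(1) be(1) al(3) be(3), of a b i j] unfolding D_def[symmetric] x1 by blast
  have mu: "muof n alpha beta D \<in> partitions n" "D \<in> Bset n (muof n alpha beta D) alpha beta"
    using muof[OF al(1) be(1) D] by auto
  have "(alpha, i, beta, j, D) \<in> Tset n a b (muof n alpha beta D)"
    using al be mu by (simp add: Tset_def)
  then have "idx n a b (muof n alpha beta D) (alpha, i, beta, j, D) < cnt n a b (muof n alpha beta D)"
    using bij_betwE[OF idx_bij] by blast
  moreover have "l1 \<circ> gof n alpha beta D \<in> bijs n U"
    using bijs_comp[OF l1] gof[OF al(1) be(1) D] by blast
  ultimately show ?thesis unfolding ph CEsp_mem using mu(1) by blast
qed

lemma inj_compr: "g permutes {1..n} \<Longrightarrow> inj (\<lambda>l. (l :: nat \<Rightarrow> 'a) \<circ> g)"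
proof (rule injI)
  fix x y :: "nat \<Rightarrow> 'a" assume g: "g permutes {1..n}" and e: "x \<circ> g = y \<circ> g"
  have "x = x \<circ> g \<circ> inv g" using bij_o_inv[OF permutes_bij[OF g]] by (simp add: comp_assoc)
  also have "\<dots> = y" using e bij_o_inv[OF permutes_bij[OF g]] by (simp add: comp_assoc)
  finally show "x = y" .
qed

lemma phi_inj: "inj_on (phiF n a b) (CEsp n a U \<times> CEsp n b U)"
proof (rule inj_onI)
  fix x y assume x: "x \<in> CEsp n a U \<times> CEsp n b U" and y: "y \<in> CEsp n a U \<times> CEsp n b U"
    and e: "phiF n a b x = phiF n a b y"
  obtain alpha i l beta j l' where
    x1: "x = ((alpha, i, cos l (Mg alpha)), (beta, j, cos l' (Mg beta)))"
    and al: "alpha \<in> partitions n" "i < a alpha" "l \<in> bijs n U"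
    and be: "beta \<in> partitions n" "j < b beta" "l' \<in> bijs n U"
    using x by (rule prod_memE)
  obtain alpha2 i2 m beta2 j2 m' where
    y1: "y = ((alpha2, i2, cos m (Mg alpha2)), (beta2, j2, cos m' (Mg beta2)))"
    and al2: "alpha2 \<in> partitions n" "i2 < a alpha2" "m \<in> bijs n U"
    and be2: "beta2 \<in> partitions n" "j2 < b beta2" "m' \<in> bijs n U"
    using y by (rule prod_memE)
  define D where "D = dcof n alpha beta (cos l (Mg alpha)) (cos l' (Mg beta))"
  define D2 where "D2 = dcof n alpha2 beta2 (cos m (Mg alpha2)) (cos m' (Mg beta2))"
  have D: "D \<in> DC n alpha beta" and D2: "D2 \<in> DC n alpha2 beta2"
    using phi_val[OF al(1) be(1) al(3) be(3)] phi_val[OF al2(1) be2(1) al2(3) be2(3)]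
    by (auto simp: D_def D2_def)
  have Dg: "good n alpha beta (cos l (Mg alpha)) (cos l' (Mg beta)) D"
    using dcof[OF al(1) be(1) al(3) be(3)] by (simp add: D_def)
  have ex: "phiF n a b x = (muof n alpha beta D, idx n a b (muof n alpha beta D) (alpha, i, beta, j, D),
        Out n alpha beta D (cos l (Mg alpha)) (cos l' (Mg beta)))"
    by (simp add: phiF_def x1 D_def)
  have ey: "phiF n a b y = (muof n alpha2 beta2 D2, idx n a b (muof n alpha2 beta2 D2) (alpha2, i2, beta2, j2, D2),
        Out n alpha2 beta2 D2 (cos m (Mg alpha2)) (cos m' (Mg beta2)))"
    by (simp add: phiF_def y1 D2_def)
  have teq: "(muof n alpha beta D, idx n a b (muof n alpha beta D) (alpha, i, beta, j, D),
        Out n alpha beta D (cos l (Mg alpha)) (cos l' (Mg beta))) =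
      (muof n alpha2 beta2 D2, idx n a b (muof n alpha2 beta2 D2) (alpha2, i2, beta2, j2, D2),
        Out n alpha2 beta2 D2 (cos m (Mg alpha2)) (cos m' (Mg beta2)))"
    using e unfolding ex ey .
  have mu: "muof n alpha2 beta2 D2 = muof n alpha beta D" using teq by simp
  let ?mu = "muof n alpha beta D"
  have t1: "(alpha, i, beta, j, D) \<in> Tset n a b ?mu"
    using al be muof[OF al(1) be(1) D] by (simp add: Tset_def)
  have t2: "(alpha2, i2, beta2, j2, D2) \<in> Tset n a b ?mu"
    using al2 be2 muof[OF al2(1) be2(1) D2] mu by (simp add: Tset_def)
  have "idx n a b ?mu (alpha, i, beta, j, D) = idx n a b ?mu (alpha2, i2, beta2, j2, D2)"
    using teq mu by simp
  then have tt: "(alpha, i, beta, j, D) = (alpha2, i2, beta2, j2, D2)"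
    by (rule inj_onD[OF bij_betw_imp_inj_on[OF idx_bij] _ t1 t2])
  then have eqs: "alpha2 = alpha" "i2 = i" "beta2 = beta" "j2 = j" "D2 = D" by auto
  have H: "pgrp n (Mg alpha)" and K: "pgrp n (Mg beta)" using Mg_pgrp al be by auto
  let ?p = "rep n alpha beta D" and ?g = "gof n alpha beta D"
  have gp: "?g permutes {1..n}" using gof[OF al(1) be(1) D] by blast
  have "Out n alpha beta D (cos l (Mg alpha)) (cos l' (Mg beta)) = Out n alpha beta D (cos m (Mg alpha)) (cos m' (Mg beta))"
    using teq unfolding eqs by simp
  then have "{x \<in> cos l (Mg alpha). x \<circ> ?p \<in> cos l' (Mg beta)} = {x \<in> cos m (Mg alpha). x \<circ> ?p \<in> cos m' (Mg beta)}"
    unfolding Out_def inj_image_eq_iff[OF inj_compr[OF gp]] .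
  moreover obtain l1 where l1: "l1 \<in> cos l (Mg alpha)" "l1 \<circ> ?p \<in> cos l' (Mg beta)"
    using Dg by (auto simp: good_def)
  ultimately have l1m: "l1 \<in> cos m (Mg alpha)" "l1 \<circ> ?p \<in> cos m' (Mg beta)" by auto
  have "cos l (Mg alpha) = cos m (Mg alpha)" using cos_eq[OF H l1(1)] cos_eq[OF H l1m(1)] by simp
  moreover have "cos l' (Mg beta) = cos m' (Mg beta)" using cos_eq[OF K l1(2)] cos_eq[OF K l1m(2)] by simp
  ultimately show "x = y" using x1 y1 eqs by simp
qed

lemma phi_surj:
  assumes y: "y \<in> CEsp n (cnt n a b) U"
  shows "y \<in> phiF n a b ` (CEsp n a U \<times> CEsp n b U)"
proof -
  obtain mu k m where y1: "y = (mu, k, cos m (Mg mu))" and mu: "mu \<in> partitions n"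
    and k: "k < cnt n a b mu" and m: "m \<in> bijs n U"
    using y unfolding CEsp_mem by auto
  have "k \<in> idx n a b mu ` Tset n a b mu" using idx_bij[of n a b mu] k by (simp add: bij_betw_def)
  then obtain t where t: "t \<in> Tset n a b mu" "k = idx n a b mu t" by blast
  then obtain alpha i beta j D where tt: "t = (alpha, i, beta, j, D)" and al: "alpha \<in> partitions n" "i < a alpha"
    and be: "beta \<in> partitions n" "j < b beta" and DB: "D \<in> Bset n mu alpha beta"
    by (auto simp: Tset_def)
  have H: "pgrp n (Mg alpha)" and K: "pgrp n (Mg beta)" using Mg_pgrp al be by auto
  have D: "D \<in> DC n alpha beta" using DB Bset_sub_DC by blast
  have mueq: "muof n alpha beta D = mu" using muof_eq[OF al(1) be(1) mu DB] .
  let ?p = "rep n alpha beta D" and ?g = "gof n alpha beta D"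
  have pp: "?p permutes {1..n}" using rep[OF D] by blast
  have gp: "?g permutes {1..n}" using gof[OF al(1) be(1) D] by blast
  define l1 where "l1 = m \<circ> inv ?g"
  have l1b: "l1 \<in> bijs n U" unfolding l1_def by (rule bijs_comp[OF m permutes_inv[OF gp]])
  have l1p: "l1 \<circ> ?p \<in> bijs n U" by (rule bijs_comp[OF l1b pp])
  let ?c = "cos l1 (Mg alpha)" and ?c' = "cos (l1 \<circ> ?p) (Mg beta)"
  have s1: "l1 \<in> ?c" by (rule cos_self[OF H])
  have s2: "l1 \<circ> ?p \<in> ?c'" by (rule cos_self[OF K])
  have good: "good n alpha beta ?c ?c' D" using s1 s2 by (auto simp: good_def)
  have dc: "dcof n alpha beta ?c ?c' = D" by (rule dcof_eq[OF al(1) be(1) l1b l1p D good])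
  have "Out n alpha beta D ?c ?c' = cos (l1 \<circ> ?g) (Mg (muof n alpha beta D))"
    by (rule Out_struct[OF al(1) be(1) l1b l1p D s1 s2])
  also have "l1 \<circ> ?g = m" using bij_inv_o[OF permutes_bij[OF gp]] by (simp add: l1_def comp_assoc)
  finally have out: "Out n alpha beta D ?c ?c' = cos m (Mg mu)" by (simp only: mueq)
  define x where "x = ((alpha, i, ?c), (beta, j, ?c'))"
  have xin: "x \<in> CEsp n a U \<times> CEsp n b U"
    unfolding x_def using CEsp_memI[where a=a and alpha=alpha, OF al(1) al(2) l1b] CEsp_memI[where a=b and alpha=beta, OF be(1) be(2) l1p] by simp
  have "phiF n a b x = (muof n alpha beta D, idx n a b (muof n alpha beta D) (alpha, i, beta, j, D),
      Out n alpha beta D ?c ?c')" by (simp add: phiF_def x_def dc)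
  then have "phiF n a b x = (mu, idx n a b mu t, cos m (Mg mu))" unfolding mueq out tt .
  then have "phiF n a b x = y" using y1 t(2) by simp
  then show ?thesis using xin by blast
qed

lemma phi_bij: "bij_betw (phiF n a b) (CEsp n a U \<times> CEsp n b U) (CEsp n (cnt n a b) U)"
  unfolding bij_betw_def using phi_inj phi_into phi_surj by blast

lemma phi_nat:
  assumes s: "bij_betw s U V" and x: "x \<in> CEsp n a U \<times> CEsp n b U"
  shows "phiF n a b (prod_transport (CEsp_transport n) (CEsp_transport n) s x) = CEsp_transport n s (phiF n a b x)"
proof -
  obtain alpha i l beta j l' where
    x1: "x = ((alpha, i, cos l (Mg alpha)), (beta, j, cos l' (Mg beta)))"
    and al: "alpha \<in> partitions n" "i < a alpha" "l \<in> bijs n U"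
    and be: "beta \<in> partitions n" "j < b beta" "l' \<in> bijs n U"
    using x by (rule prod_memE)
  have H: "pgrp n (Mg alpha)" and K: "pgrp n (Mg beta)" using Mg_pgrp al be by auto
  have injs: "inj_on s U" using s by (simp add: bij_betw_def)
  let ?c = "cos l (Mg alpha)" and ?c' = "cos l' (Mg beta)"
  let ?tc = "cos (tr n s l) (Mg alpha)" and ?tc' = "cos (tr n s l') (Mg beta)"
  have tb: "tr n s l \<in> bijs n V" "tr n s l' \<in> bijs n V" using tr_bijs[OF s] al(3) be(3) by auto
  have tx: "prod_transport (CEsp_transport n) (CEsp_transport n) s x = ((alpha, i, ?tc), (beta, j, ?tc'))"
    by (simp add: prod_transport_def CEsp_transport_def x1 quot_transport_eq tr_cos[OF H] tr_cos[OF K])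
  define D where "D = dcof n alpha beta ?c ?c'"
  have D: "D \<in> DC n alpha beta" "good n alpha beta ?c ?c' D"
    using dcof[OF al(1) be(1) al(3) be(3)] by (auto simp: D_def)
  let ?p = "rep n alpha beta D" and ?g = "gof n alpha beta D"
  have pp: "?p permutes {1..n}" using rep[OF D(1)] by blast
  have gp: "?g permutes {1..n}" using gof[OF al(1) be(1) D(1)] by blast
  obtain l1 where l1: "l1 \<in> ?c" "l1 \<circ> ?p \<in> ?c'" using D(2) by (auto simp: good_def)
  have "tr n s l1 \<in> ?tc" using l1(1) tr_cos[OF H, of s l] by auto
  moreover have "tr n s l1 \<circ> ?p \<in> ?tc'"
  proof -
    have "tr n s (l1 \<circ> ?p) \<in> tr n s ` ?c'" using l1(2) by (rule imageI)
    then show ?thesis using tr_cos[OF K, of s l'] tr_comp[OF pp, of s l1] by simp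
  qed
  ultimately have "good n alpha beta ?tc ?tc' D" by (auto simp: good_def)
  then have D': "dcof n alpha beta ?tc ?tc' = D" by (rule dcof_eq[OF al(1) be(1) tb D(1)])
  have cb: "?c \<subseteq> bijs n U" "?c' \<subseteq> bijs n U" using cos_bijs[OF H al(3)] cos_bijs[OF K be(3)] by auto
  have "Out n alpha beta D ?tc ?tc' = (\<lambda>x. x \<circ> ?g) ` {x \<in> tr n s ` ?c. x \<circ> ?p \<in> tr n s ` ?c'}"
    by (simp add: Out_def tr_cos[OF H] tr_cos[OF K])
  also have "\<dots> = (\<lambda>x. x \<circ> ?g) ` tr n s ` {x \<in> ?c. x \<circ> ?p \<in> ?c'}"
    by (simp only: tr_pairs[OF injs cb pp])
  also have "\<dots> = tr n s ` Out n alpha beta D ?c ?c'"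
    by (simp only: tr_compg[OF gp] Out_def)
  finally have o: "Out n alpha beta D ?tc ?tc' = quot_transport n s (Out n alpha beta D ?c ?c')"
    by (simp add: quot_transport_eq)
  show ?thesis unfolding tx
    by (simp add: phiF_def D' o x1 CEsp_transport_def D_def[symmetric])
qed

theorem mainTheorem11:
  fixes n :: nat and a b :: "nat list \<Rightarrow> nat"
  shows "species_iso
           (prod_species (CEsp n a) (CEsp n b) :: 'a set \<Rightarrow> _)
           (prod_transport (CEsp_transport n) (CEsp_transport n))
           (CEsp n (\<lambda>mu. \<Sum>alpha\<in>partitions n. \<Sum>beta\<in>partitions n.
                           a alpha * b beta * bcoef n mu alpha beta))
           (CEsp_transport n)"
proof -
  have c: "(\<lambda>mu. \<Sum>alpha\<in>partitions n. \<Sum>beta\<in>partitions n. a alpha * b beta * bcoef n mu alpha beta) = cnt n a b"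
    by (simp add: cnt_def)
  show ?thesis unfolding species_iso_def c prod_species_def
  proof (rule exI[of _ "\<lambda>U. phiF n a b"], intro conjI allI impI ballI)
    fix U :: "'a set" assume "finite U"
    show "bij_betw (phiF n a b) (CEsp n a U \<times> CEsp n b U) (CEsp n (cnt n a b) U)" by (rule phi_bij)
  next
    fix U V :: "'a set" and s x assume "finite U \<and> bij_betw s U V" and "x \<in> CEsp n a U \<times> CEsp n b U"
    then show "phiF n a b (prod_transport (CEsp_transport n) (CEsp_transport n) s x) =
       CEsp_transport n s (phiF n a b x)" using phi_nat by blast
  qed
qed


end
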